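(* Assume the bounded-cost assumption, $J\ge2$, and $T=\Omega(J^2\bar L_T)$ where $\bar L_T=\max_jL^j_T$. If all agents use POMWU with learning rate $\eta^\star=\Theta\big(J^{-1/2}T^{-1/4}[\ln K(\bar L_T+m)]^{1/4}\big)$, then the map $\hat{\boldsymbol\nu}_T$ is an $\varepsilon$-contextual coarse correlated equilibrium with $$\varepsilon=O\big([\ln K(\bar L_T+m)]^{3/4}T^{-3/4}J^{1/2}\big).$$
   Context: Setting. There are $J$ agents indexed by $j\in[J]$. Agent $j$ has a finite action set $\mathcal A^j=\{a^j_1,\dots,a^j_K\}$ with $K$ elements; $\mathcal A=\prod_i\mathcal A^i$, $\mathcal A^{-j}=\prod_{i\ne j}\mathcal A^i$. $\Delta_K$ is the probability simplex in $\mathbb R^K$, $w\in\Delta_K$ identified with a distribution on $\mathcal A^j$; $\mathscr P(S)$ is the set of distributions on a finite set $S$. The context set $\mathcal Z=\{z_1,\dots,z_m\}\subset\mathbb R^d$ is finite with $m$ elements. Agent $j$ has $\phi^j:\mathcal A\to\mathbb R^d$ and cost $c^j(\mathbf w,Z)=\mathbb E_{\mathbf a\sim\mathbf w}[\langle\phi^j(\mathbf a),Z\rangle]$; $c^j(w,\mathbf w^{-j},Z)=c^j(w\otimes\mathbf w^{-j},Z)$. $\Phi^j(\mathbf w^{-j})\in\mathbb R^{d\times K}$ has entries $\Phi^j(\mathbf w^{-j})_{\ell,k}=\mathbb E_{\mathbf a^{-j}\sim\mathbf w^{-j}}[\phi^j(a^j_k,\mathbf a^{-j})[\ell]]$. Bounded-cost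 assumption: $|\langle Z,\phi^j(\mathbf a)\rangle|\le1$ for all $j,\mathbf a,Z$. Game protocol: $T$ rounds, fixed sequence $Z_1,\dots,Z_T\in\mathcal Z$; at round $t$ each agent $j$ receives a prediction $\hat Z^j_t\in\mathcal Z$, plays $w^j_t\in\Delta_K$, incurs $c^j(w^j_t,\mathbf w^{-j}_t,Z_t)$ with $\mathbf w^{-j}_t=\bigotimes_{i\ne j}w^i_t$, and observes $Z_t$ and $\Phi^j(\mathbf w^{-j}_t)$. $\mathscr T^z=\{t:Z_t=z\}$, $n_z=|\mathscr T^z|$, $L^j_T=\sum_{t}\mathbf 1\{\hat Z^j_t\ne Z_t\}$. POMWU with learning rate $\eta>0$ (for agent $j$): maintain for each $z\in\mathcal Z$ a vector $\rho_z\in\mathbb R^K_{>0}$, initialized to $(1/K,\dots,1/K)$, and a matrix $\Psi_z\in\mathbb R^{d\times K}$, initialized to $0$. At round $t$, with $\hat Z=\hat Z^j_t$, play $w^j_t[\ell]=\rho_{\hat Z}[\ell]\exp(-\eta(\Psi_{\hat Z}^\top\hat Z)[\ell])/\sum_{k=1}^K\rho_{\hat Z}[k]\exp(-\eta(\Psi_{\hat Z}^\top\hat Z)[k])$. After observing $Z_t$ and $\Phi_t=\Phi^j(\mathbf w^{-j}_t)$, set $\Psi_{Z_t}\leftarrow\Phi_t$ and $\rho_{Z_t}[\ell]\leftarrow\rho_{Z_t}[\ell]\exp(-\eta(\Phi_t^\top Z_t)[\ell])$ for all $\ell$. $\hat{\boldsymbol\nu}_T:\mathcal Z\to\mathscr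 P(\mathcal A)$: $\hat{\boldsymbol\nu}_T(z)=n_z^{-1}\sum_{t\in\mathscr T^z}w^1_t\otimes\dots\otimes w^J_t$ if $n_z>0$, the uniform distribution on $\mathcal A$ otherwise. For $\boldsymbol\nu:\mathcal Z\to\mathscr P(\mathcal A)$, $\boldsymbol\nu^{-j}(z)$ is the marginal of $\boldsymbol\nu(z)$ on $\mathcal A^{-j}$. An $\varepsilon$-contextual coarse correlated equilibrium is $\boldsymbol\nu:\mathcal Z\to\mathscr P(\mathcal A)$ such that for every $j$ and every $\pi:\mathcal Z\to\Delta_K$, $T^{-1}\sum_tc^j(\boldsymbol\nu(Z_t),Z_t)\le T^{-1}\sum_tc^j(\pi(Z_t),\boldsymbol\nu^{-j}(Z_t),Z_t)+\varepsilon$. $O,\Omega,\Theta$ hide absolute constants. *)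

theory Defs
  imports Complex_Main "HOL-Library.FuncSet"
begin

text \<open>Agents are 0..<J, actions of each agent are 0..<K, contexts are vectors
  in R^d represented as functions nat => real vanishing from index d on.\<close>

definition ip :: "nat \<Rightarrow> (nat \<Rightarrow> real) \<Rightarrow> (nat \<Rightarrow> real) \<Rightarrow> real" where
  "ip d x y = (\<Sum>i<d. x i * y i)"

definition vecs :: "nat \<Rightarrow> (nat \<Rightarrow> real) set" where
  "vecs d = {z. \<forall>i\<ge>d. z i = 0}"

definition simplex :: "nat \<Rightarrow> (nat \<Rightarrow> real) set" where
  "simplex K = {w. (\<forall>k<K. 0 \<le> w k) \<and> (\<Sum>k<K. w k) = 1}"

definition profiles :: "nat \<Rightarrow> nat \<Rightarrow> (nat \<Rightarrow> nat) set" where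
  "profiles J K = PiE {..<J} (\<lambda>_. {..<K})"

definition others :: "nat \<Rightarrow> nat \<Rightarrow> nat \<Rightarrow> (nat \<Rightarrow> nat) set" where
  "others J K j = PiE ({..<J} - {j}) (\<lambda>_. {..<K})"

definition Phi :: "nat \<Rightarrow> nat \<Rightarrow> (nat \<Rightarrow> (nat \<Rightarrow> nat) \<Rightarrow> nat \<Rightarrow> real)
    \<Rightarrow> (nat \<Rightarrow> nat \<Rightarrow> real) \<Rightarrow> nat \<Rightarrow> nat \<Rightarrow> nat \<Rightarrow> real" where
  "Phi J K phi W j k = (\<lambda>l. \<Sum>b\<in>others J K j.
      (\<Prod>i\<in>{..<J} - {j}. W i (b i)) * phi j (b(j := k)) l)"

text \<open>POMWU play given the state (rho_z, Psi_z) and prediction zh.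
  Psi z l is the l-th column of Psi_z, so (Psi_z^T zh)[l] = ip d (Psi z l) zh.\<close>
definition mwu_play :: "nat \<Rightarrow> nat \<Rightarrow> real \<Rightarrow> ((nat \<Rightarrow> real) \<Rightarrow> nat \<Rightarrow> real)
    \<Rightarrow> ((nat \<Rightarrow> real) \<Rightarrow> nat \<Rightarrow> nat \<Rightarrow> real) \<Rightarrow> (nat \<Rightarrow> real) \<Rightarrow> nat \<Rightarrow> real" where
  "mwu_play K d eta rho Psi zh = (\<lambda>l.
      rho zh l * exp (- eta * ip d (Psi zh l) zh) /
      (\<Sum>k<K. rho zh k * exp (- eta * ip d (Psi zh k) zh)))"

text \<open>Joint state of all agents running POMWU: for agent j and context z,
  fst gives rho_z and snd gives Psi_z (by columns). Rounds are t = 0..<T,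
  Zs t is the true context, preds j t the prediction of agent j.\<close>
primrec pomwu_state :: "nat \<Rightarrow> nat \<Rightarrow> nat \<Rightarrow> (nat \<Rightarrow> (nat \<Rightarrow> nat) \<Rightarrow> nat \<Rightarrow> real)
    \<Rightarrow> (nat \<Rightarrow> nat \<Rightarrow> real) \<Rightarrow> (nat \<Rightarrow> nat \<Rightarrow> nat \<Rightarrow> real) \<Rightarrow> real \<Rightarrow> nat
    \<Rightarrow> (nat \<Rightarrow> (nat \<Rightarrow> real) \<Rightarrow> nat \<Rightarrow> real) \<times> (nat \<Rightarrow> (nat \<Rightarrow> real) \<Rightarrow> nat \<Rightarrow> nat \<Rightarrow> real)"
  where
  "pomwu_state J K d phi Zs preds eta 0 = ((\<lambda>j z l. 1 / real K), (\<lambda>j z l. (\<lambda>_. 0)))"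
| "pomwu_state J K d phi Zs preds eta (Suc t) =
     (let st = pomwu_state J K d phi Zs preds eta t;
          W = (\<lambda>j. mwu_play K d eta (fst st j) (snd st j) (preds j t))
      in ((\<lambda>j z l. if z = Zs t
                    then fst st j z l * exp (- eta * ip d (Phi J K phi W j l) (Zs t))
                    else fst st j z l),
          (\<lambda>j z l. if z = Zs t then Phi J K phi W j l else snd st j z l)))"

definition pomwu_play :: "nat \<Rightarrow> nat \<Rightarrow> nat \<Rightarrow> (nat \<Rightarrow> (nat \<Rightarrow> nat) \<Rightarrow> nat \<Rightarrow> real)
    \<Rightarrow> (nat \<Rightarrow> nat \<Rightarrow> real) \<Rightarrow> (nat \<Rightarrow> nat \<Rightarrow> nat \<Rightarrow> real) \<Rightarrow> real \<Rightarrow> nat \<Rightarrow> nat \<Rightarrow> nat \<Rightarrow> real"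
  where
  "pomwu_play J K d phi Zs preds eta t j =
     (let st = pomwu_state J K d phi Zs preds eta t
      in mwu_play K d eta (fst st j) (snd st j) (preds j t))"

definition nu_hat :: "nat \<Rightarrow> nat \<Rightarrow> (nat \<Rightarrow> nat \<Rightarrow> real) \<Rightarrow> nat
    \<Rightarrow> (nat \<Rightarrow> nat \<Rightarrow> nat \<Rightarrow> real) \<Rightarrow> (nat \<Rightarrow> real) \<Rightarrow> (nat \<Rightarrow> nat) \<Rightarrow> real" where
  "nu_hat J K Zs T W z a =
     (if a \<notin> profiles J K then 0
      else if card {t. t < T \<and> Zs t = z} > 0
      then (\<Sum>t\<in>{t. t < T \<and> Zs t = z}. \<Prod>i<J. W t i (a i)) / real (card {t. t < T \<and> Zs t = z})
      else 1 / real K ^ J)"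

definition cost :: "nat \<Rightarrow> nat \<Rightarrow> nat \<Rightarrow> (nat \<Rightarrow> (nat \<Rightarrow> nat) \<Rightarrow> nat \<Rightarrow> real)
    \<Rightarrow> ((nat \<Rightarrow> nat) \<Rightarrow> real) \<Rightarrow> nat \<Rightarrow> (nat \<Rightarrow> real) \<Rightarrow> real" where
  "cost J K d phi nu j z = (\<Sum>a\<in>profiles J K. nu a * ip d (phi j a) z)"

definition marg_minus :: "nat \<Rightarrow> ((nat \<Rightarrow> nat) \<Rightarrow> real) \<Rightarrow> nat \<Rightarrow> (nat \<Rightarrow> nat) \<Rightarrow> real" where
  "marg_minus K nu j b = (\<Sum>k<K. nu (b(j := k)))"

definition dev_cost :: "nat \<Rightarrow> nat \<Rightarrow> nat \<Rightarrow> (nat \<Rightarrow> (nat \<Rightarrow> nat) \<Rightarrow> nat \<Rightarrow> real)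
    \<Rightarrow> (nat \<Rightarrow> real) \<Rightarrow> ((nat \<Rightarrow> nat) \<Rightarrow> real) \<Rightarrow> nat \<Rightarrow> (nat \<Rightarrow> real) \<Rightarrow> real" where
  "dev_cost J K d phi w nu j z =
     (\<Sum>b\<in>others J K j. \<Sum>k<K. w k * marg_minus K nu j b * ip d (phi j (b(j := k))) z)"

definition contextual_CCE :: "nat \<Rightarrow> nat \<Rightarrow> nat \<Rightarrow> (nat \<Rightarrow> (nat \<Rightarrow> nat) \<Rightarrow> nat \<Rightarrow> real)
    \<Rightarrow> (nat \<Rightarrow> real) set \<Rightarrow> (nat \<Rightarrow> nat \<Rightarrow> real) \<Rightarrow> nat
    \<Rightarrow> ((nat \<Rightarrow> real) \<Rightarrow> (nat \<Rightarrow> nat) \<Rightarrow> real) \<Rightarrow> real \<Rightarrow> bool" where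
  "contextual_CCE J K d phi Zset Zs T nu eps \<longleftrightarrow>
     (\<forall>j<J. \<forall>\<pi>. (\<forall>z\<in>Zset. \<pi> z \<in> simplex K) \<longrightarrow>
        (\<Sum>t<T. cost J K d phi (nu (Zs t)) j (Zs t)) / real T
          \<le> (\<Sum>t<T. dev_cost J K d phi (\<pi> (Zs t)) (nu (Zs t)) j (Zs t)) / real T + eps)"

definition Lbar :: "nat \<Rightarrow> nat \<Rightarrow> (nat \<Rightarrow> nat \<Rightarrow> nat \<Rightarrow> real) \<Rightarrow> (nat \<Rightarrow> nat \<Rightarrow> real) \<Rightarrow> nat" where
  "Lbar J T preds Zs = Max ((\<lambda>j. card {t. t < T \<and> preds j t \<noteq> Zs t}) ` {..<J})"

end

theory Submission
  imports Defs
begin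

lemma exp_quad: fixes y::real assumes "y \<le> 1" shows "exp y \<le> 1 + y + y^2"
proof (cases "y \<ge> 0")
  case True thus ?thesis using exp_bound assms by auto
next
  case False
  define a where "a = -y"
  have a: "a > 0" using False a_def by auto
  have e: "2 + 2*a + a^2 \<le> 2 * exp a" using a exp_lower_Taylor_quadratic[of a] by auto
  define q where "q = 1 - a + a^2"
  have qe: "q = (a - 1/2)^2 + 3/4" unfolding q_def by (simp add: power2_eq_square algebra_simps)
  have q: "q > 0" unfolding qe by (simp add: add_nonneg_pos)
  have p: "q * (2 + 2*a + a^2) = 2 + a^2 + a^3 + a^4"
    unfolding q_def by (simp add: power2_eq_square power3_eq_cube power4_eq_xxxx algebra_simps)
  have "2 \<le> q * (2 + 2*a + a^2)" unfolding p using a by simp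
  also have "\<dots> \<le> q * (2 * exp a)" using e q by (intro mult_left_mono) auto
  finally have "1 / exp a \<le> q" by (simp add: divide_le_eq mult.commute)
  thus ?thesis by (simp add: a_def q_def exp_minus inverse_eq_divide)
qed

lemma jensen_exp:
  fixes x y :: "nat \<Rightarrow> real"
  assumes "\<forall>k<K. x k \<ge> 0" "(\<Sum>k<K. x k) = 1"
  shows "exp (\<Sum>k<K. x k * y k) \<le> (\<Sum>k<K. x k * exp (y k))"
proof -
  define \<mu> where "\<mu> = (\<Sum>k<K. x k * y k)"
  have "\<forall>k<K. x k * (exp \<mu> * (1 + (y k - \<mu>))) \<le> x k * exp (y k)"
  proof (intro allI impI)
    fix k assume k: "k < K"
    have "exp \<mu> * (1 + (y k - \<mu>)) \<le> exp \<mu> * exp (y k - \<mu>)"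
      using exp_ge_add_one_self by (intro mult_left_mono) auto
    also have "\<dots> = exp (y k)" by (simp add: exp_diff)
    finally show "x k * (exp \<mu> * (1 + (y k - \<mu>))) \<le> x k * exp (y k)"
      using assms(1) k by (intro mult_left_mono) auto
  qed
  hence "(\<Sum>k<K. x k * (exp \<mu> * (1 + (y k - \<mu>)))) \<le> (\<Sum>k<K. x k * exp (y k))"
    by (intro sum_mono) auto
  moreover have "(\<Sum>k<K. x k * (exp \<mu> * (1 + (y k - \<mu>)))) = exp \<mu> * ((\<Sum>k<K. x k) + (\<Sum>k<K. x k * y k) - \<mu> * (\<Sum>k<K. x k))"
    by (simp add: sum_distrib_left sum_distrib_right sum_subtractf sum.distrib algebra_simps)
  ultimately show ?thesis using assms(2) by (simp add: \<mu>_def)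
qed

definition SS :: "nat \<Rightarrow> real \<Rightarrow> (nat \<Rightarrow> real) \<Rightarrow> real" where
  "SS K eta v = (\<Sum>k<K. exp (- eta * v k))"
definition smx :: "nat \<Rightarrow> real \<Rightarrow> (nat \<Rightarrow> real) \<Rightarrow> nat \<Rightarrow> real" where
  "smx K eta v k = exp (- eta * v k) / SS K eta v"
definition Apot :: "nat \<Rightarrow> real \<Rightarrow> (nat \<Rightarrow> real) \<Rightarrow> real" where
  "Apot K eta v = - ln (SS K eta v / real K) / eta"

lemma SS_pos: "K \<ge> 1 \<Longrightarrow> SS K eta v > 0"
  unfolding SS_def by (intro sum_pos) (auto simp: lessThan_empty_iff)

lemma smx_simplex: assumes "K \<ge> 1" shows "\<forall>k<K. smx K eta v k \<ge> 0" "(\<Sum>k<K. smx K eta v k) = 1"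
  using SS_pos[OF assms, of eta v]
  by (auto simp: smx_def sum_divide_distrib[symmetric] SS_def)

lemma hedge_step:
  fixes L l m :: "nat \<Rightarrow> real"
  assumes K: "K \<ge> 1" and eta: "eta > 0"
    and D: "\<forall>k<K. \<bar>l k - m k\<bar> \<le> D" and eD: "eta * D \<le> 1"
  shows "(\<Sum>k<K. smx K eta (\<lambda>k. L k + m k) k * l k) + Apot K eta L - Apot K eta (\<lambda>k. L k + l k)
         \<le> eta * D^2"
proof -
  define x where "x = smx K eta (\<lambda>k. L k + m k)"
  have x0: "\<forall>k<K. x k \<ge> 0" and x1: "(\<Sum>k<K. x k) = 1" using smx_simplex[OF K] x_def by auto
  define Sm where "Sm = SS K eta (\<lambda>k. L k + m k)"
  have Sm: "Sm > 0" using SS_pos[OF K] Sm_def by auto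
  have SL: "SS K eta L > 0" "SS K eta (\<lambda>k. L k + l k) > 0" using SS_pos[OF K] by auto
  have r1: "SS K eta (\<lambda>k. L k + l k) / Sm = (\<Sum>k<K. x k * exp (- eta * (l k - m k)))"
    unfolding SS_def x_def smx_def Sm_def sum_divide_distrib
  proof (intro sum.cong refl)
    fix k
    have "exp (- eta * (L k + l k)) = exp (- eta * (L k + m k)) * exp (- eta * (l k - m k))"
      by (simp flip: exp_add add: algebra_simps)
    thus "exp (- eta * (L k + l k)) / (\<Sum>k<K. exp (- eta * (L k + m k))) =
          exp (- eta * (L k + m k)) / (\<Sum>k<K. exp (- eta * (L k + m k))) * exp (- eta * (l k - m k))"
      by simp
  qed
  have r2: "SS K eta L / Sm = (\<Sum>k<K. x k * exp (eta * m k))"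
    unfolding SS_def x_def smx_def Sm_def sum_divide_distrib
  proof (intro sum.cong refl)
    fix k
    have "exp (- eta * L k) = exp (- eta * (L k + m k)) * exp (eta * m k)"
      by (simp flip: exp_add add: algebra_simps)
    thus "exp (- eta * L k) / (\<Sum>k<K. exp (- eta * (L k + m k))) =
          exp (- eta * (L k + m k)) / (\<Sum>k<K. exp (- eta * (L k + m k))) * exp (eta * m k)"
      by simp
  qed
  have "(\<Sum>k<K. x k * exp (- eta * (l k - m k))) \<le> (\<Sum>k<K. x k * (1 + (- eta * (l k - m k)) + eta^2 * D^2))"
  proof (intro sum_mono mult_left_mono)
    fix k assume k: "k \<in> {..<K}"
    have a: "\<bar>eta * (l k - m k)\<bar> \<le> eta * D" using D k eta by (simp add: abs_mult)
    hence "- eta * (l k - m k) \<le> 1" using eD by linarith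
    hence "exp (- eta * (l k - m k)) \<le> 1 + (- eta * (l k - m k)) + (- eta * (l k - m k))^2"
      by (rule exp_quad)
    moreover have "(- eta * (l k - m k))^2 \<le> (eta * D)^2"
    proof -
      have "(- eta * (l k - m k))^2 = \<bar>eta * (l k - m k)\<bar>^2" by simp
      also have "\<dots> \<le> (eta * D)^2" using a by (intro power_mono) auto
      finally show ?thesis .
    qed
    ultimately show "exp (- eta * (l k - m k)) \<le> 1 + (- eta * (l k - m k)) + eta^2 * D^2"
      by (simp add: power_mult_distrib)
    show "0 \<le> x k" using x0 k by auto
  qed
  also have "\<dots> = (\<Sum>k<K. x k) - eta * (\<Sum>k<K. x k * (l k - m k)) + eta^2 * D^2 * (\<Sum>k<K. x k)"
    by (simp add: algebra_simps sum.distrib sum_distrib_left sum_distrib_right sum_subtractf)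
  also have "\<dots> = 1 - eta * (\<Sum>k<K. x k * (l k - m k)) + eta^2 * D^2"
    using x1 by simp
  finally have u1: "SS K eta (\<lambda>k. L k + l k) / Sm \<le> 1 - eta * (\<Sum>k<K. x k * (l k - m k)) + eta^2 * D^2"
    using r1 by simp
  have l1: "ln (SS K eta (\<lambda>k. L k + l k) / Sm) \<le> - eta * (\<Sum>k<K. x k * (l k - m k)) + eta^2 * D^2"
  proof -
    have "ln (SS K eta (\<lambda>k. L k + l k) / Sm) \<le> SS K eta (\<lambda>k. L k + l k) / Sm - 1"
      using SL Sm by (intro ln_le_minus_one) auto
    thus ?thesis using u1 by linarith
  qed
  have "exp (\<Sum>k<K. x k * (eta * m k)) \<le> SS K eta L / Sm"
    using jensen_exp[OF x0 x1, of "\<lambda>k. eta * m k"] r2 by simp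
  hence l2: "eta * (\<Sum>k<K. x k * m k) \<le> ln (SS K eta L / Sm)"
    using SL Sm by (simp add: ln_ge_iff sum_distrib_left algebra_simps)
  have "Apot K eta L - Apot K eta (\<lambda>k. L k + l k)
      = (ln (SS K eta (\<lambda>k. L k + l k) / Sm) - ln (SS K eta L / Sm)) / eta"
    using SL Sm K unfolding Apot_def by (simp add: ln_div diff_divide_distrib)
  also have "\<dots> \<le> (- eta * (\<Sum>k<K. x k * (l k - m k)) + eta^2 * D^2 - eta * (\<Sum>k<K. x k * m k)) / eta"
    using l1 l2 eta by (intro divide_right_mono) auto
  also have "\<dots> = - (\<Sum>k<K. x k * (l k - m k)) + eta * D^2 - (\<Sum>k<K. x k * m k)"
    using eta by (simp add: field_simps power2_eq_square)
  also have "(\<Sum>k<K. x k * (l k - m k)) = (\<Sum>k<K. x k * l k) - (\<Sum>k<K. x k * m k)"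
    by (simp add: algebra_simps sum_subtractf)
  finally show ?thesis unfolding x_def by simp
qed



lemma upd_others: "b \<in> others J K j \<Longrightarrow> j < J \<Longrightarrow> l < K \<Longrightarrow> b(j := l) \<in> profiles J K"
  unfolding others_def profiles_def
  using PiE_fun_upd[of l "\<lambda>_. {..<K}" j b "{..<J} - {j}"]
  by (simp add: insert_absorb)

lemma sum_PiE_insert:
  assumes "finite I" "x \<notin> I"
  shows "(\<Sum>b\<in>PiE (insert x I) (\<lambda>_. A). F b) = (\<Sum>k\<in>A. \<Sum>b\<in>PiE I (\<lambda>_. A). F (b(x := k)))"
proof -
  have "(\<Sum>b\<in>PiE (insert x I) (\<lambda>_. A). F b) = (\<Sum>p\<in>A \<times> PiE I (\<lambda>_. A). F ((\<lambda>(y, g). g(x := y)) p))"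
    unfolding PiE_insert_eq using inj_combinator[OF assms(2), of "\<lambda>_. A"]
    by (subst sum.reindex) auto
  also have "\<dots> = (\<Sum>k\<in>A. \<Sum>b\<in>PiE I (\<lambda>_. A). F (b(x := k)))"
    by (subst sum.cartesian_product) (simp add: case_prod_unfold)
  finally show ?thesis .
qed

lemma prod_upd_insert:
  assumes "finite I" "x \<notin> I"
  shows "(\<Prod>i\<in>insert x I. p i ((b(x := k)) i)) = p x k * (\<Prod>i\<in>I. p i (b i))"
proof -
  have "(\<Prod>i\<in>I. p i ((b(x := k)) i)) = (\<Prod>i\<in>I. p i (b i))"
    by (rule prod.cong) (use assms in auto)
  thus ?thesis using assms by simp
qed

definition insimp :: "nat \<Rightarrow> (nat \<Rightarrow> real) \<Rightarrow> bool" where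
  "insimp K w \<longleftrightarrow> (\<forall>k<K. w k \<ge> 0) \<and> (\<Sum>k<K. w k) = 1"

lemma prod_nonneg_PiE: "\<forall>i\<in>I. insimp K (p i) \<Longrightarrow> b \<in> PiE I (\<lambda>_. {..<K}) \<Longrightarrow> (\<Prod>i\<in>I. p i (b i)) \<ge> 0"
  unfolding insimp_def by (intro prod_nonneg) (auto simp: PiE_iff)

lemma sum_prod_PiE_one: "finite I \<Longrightarrow> \<forall>i\<in>I. insimp K (p i) \<Longrightarrow>
   (\<Sum>b\<in>PiE I (\<lambda>_. {..<K}). \<Prod>i\<in>I. p i (b i)) = 1"
  using prod_sum_PiE[of I "\<lambda>_. {..<K}" p] by (simp add: insimp_def)

lemma G0:
  assumes "finite I" "\<forall>i\<in>I. insimp K (p i)" "\<forall>b\<in>PiE I (\<lambda>_. {..<K}). \<bar>g b\<bar> \<le> 1"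
  shows "\<bar>\<Sum>b\<in>PiE I (\<lambda>_. {..<K}). (\<Prod>i\<in>I. p i (b i)) * g b\<bar> \<le> 1"
proof -
  have "\<bar>\<Sum>b\<in>PiE I (\<lambda>_. {..<K}). (\<Prod>i\<in>I. p i (b i)) * g b\<bar>
      \<le> (\<Sum>b\<in>PiE I (\<lambda>_. {..<K}). \<bar>(\<Prod>i\<in>I. p i (b i)) * g b\<bar>)" by (rule sum_abs)
  also have "\<dots> \<le> (\<Sum>b\<in>PiE I (\<lambda>_. {..<K}). (\<Prod>i\<in>I. p i (b i)))"
  proof (intro sum_mono)
    fix b assume b: "b \<in> PiE I (\<lambda>_. {..<K})"
    have "\<bar>(\<Prod>i\<in>I. p i (b i)) * g b\<bar> = (\<Prod>i\<in>I. p i (b i)) * \<bar>g b\<bar>"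
      using prod_nonneg_PiE[OF assms(2) b] by (simp add: abs_mult)
    also have "\<dots> \<le> (\<Prod>i\<in>I. p i (b i)) * 1"
      using prod_nonneg_PiE[OF assms(2) b] assms(3) b by (intro mult_left_mono) auto
    finally show "\<bar>(\<Prod>i\<in>I. p i (b i)) * g b\<bar> \<le> (\<Prod>i\<in>I. p i (b i))" by simp
  qed
  also have "\<dots> = 1" using sum_prod_PiE_one assms by blast
  finally show ?thesis .
qed

lemma G1:
  fixes I :: "nat set"
  assumes "finite I" "\<forall>i\<in>I. insimp K (p i)" "\<forall>i\<in>I. insimp K (q i)"
  shows "\<forall>g. (\<forall>b\<in>PiE I (\<lambda>_. {..<K}). \<bar>g b\<bar> \<le> 1) \<longrightarrow>
     \<bar>\<Sum>b\<in>PiE I (\<lambda>_. {..<K}). ((\<Prod>i\<in>I. p i (b i)) - (\<Prod>i\<in>I. q i (b i))) * g b\<bar>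
       \<le> (\<Sum>i\<in>I. \<Sum>k<K. \<bar>p i k - q i k\<bar>)"
  using assms
proof (induction I rule: finite_induct)
  case empty
  then show ?case by simp
next
  case (insert x I)
  show ?case
  proof (intro allI impI)
    fix g :: "(nat \<Rightarrow> nat) \<Rightarrow> real"
    assume g: "\<forall>b\<in>PiE (insert x I) (\<lambda>_. {..<K}). \<bar>g b\<bar> \<le> 1"
    have pI: "\<forall>i\<in>I. insimp K (p i)" and qI: "\<forall>i\<in>I. insimp K (q i)"
      and px: "insimp K (p x)" and qx: "insimp K (q x)" using insert.prems by auto
    have gk: "\<forall>b\<in>PiE I (\<lambda>_. {..<K}). \<bar>g (b(x := k))\<bar> \<le> 1" if "k < K" for k
      using g that PiE_fun_upd[of k "\<lambda>_. {..<K}" x] by auto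
    define P where "P b = (\<Prod>i\<in>I. p i (b i))" for b
    define Q where "Q b = (\<Prod>i\<in>I. q i (b i))" for b
    have "(\<Sum>b\<in>PiE (insert x I) (\<lambda>_. {..<K}). ((\<Prod>i\<in>insert x I. p i (b i)) - (\<Prod>i\<in>insert x I. q i (b i))) * g b)
       = (\<Sum>k<K. \<Sum>b\<in>PiE I (\<lambda>_. {..<K}). (p x k * P b - q x k * Q b) * g (b(x := k)))"
      unfolding sum_PiE_insert[OF insert.hyps] prod_upd_insert[OF insert.hyps] P_def Q_def ..
    also have "\<dots> = (\<Sum>k<K. (p x k - q x k) * (\<Sum>b\<in>PiE I (\<lambda>_. {..<K}). P b * g (b(x := k))))
        + (\<Sum>k<K. q x k * (\<Sum>b\<in>PiE I (\<lambda>_. {..<K}). (P b - Q b) * g (b(x := k))))"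
      by (simp add: sum.distrib[symmetric] sum_distrib_left algebra_simps)
    finally have eq: "(\<Sum>b\<in>PiE (insert x I) (\<lambda>_. {..<K}). ((\<Prod>i\<in>insert x I. p i (b i)) - (\<Prod>i\<in>insert x I. q i (b i))) * g b)
       = (\<Sum>k<K. (p x k - q x k) * (\<Sum>b\<in>PiE I (\<lambda>_. {..<K}). P b * g (b(x := k))))
        + (\<Sum>k<K. q x k * (\<Sum>b\<in>PiE I (\<lambda>_. {..<K}). (P b - Q b) * g (b(x := k))))" .
    define S where "S = (\<Sum>i\<in>I. \<Sum>k<K. \<bar>p i k - q i k\<bar>)"
    have t1: "\<bar>\<Sum>k<K. (p x k - q x k) * (\<Sum>b\<in>PiE I (\<lambda>_. {..<K}). P b * g (b(x := k)))\<bar> \<le> (\<Sum>k<K. \<bar>p x k - q x k\<bar>)"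
    proof -
      have "\<bar>\<Sum>k<K. (p x k - q x k) * (\<Sum>b\<in>PiE I (\<lambda>_. {..<K}). P b * g (b(x := k)))\<bar>
          \<le> (\<Sum>k<K. \<bar>(p x k - q x k) * (\<Sum>b\<in>PiE I (\<lambda>_. {..<K}). P b * g (b(x := k)))\<bar>)" by (rule sum_abs)
      also have "\<dots> \<le> (\<Sum>k<K. \<bar>p x k - q x k\<bar>)"
      proof (intro sum_mono)
        fix k assume k: "k \<in> {..<K}"
        have "\<bar>\<Sum>b\<in>PiE I (\<lambda>_. {..<K}). P b * g (b(x := k))\<bar> \<le> 1"
          unfolding P_def using G0[OF insert.hyps(1) pI gk] k by auto
        thus "\<bar>(p x k - q x k) * (\<Sum>b\<in>PiE I (\<lambda>_. {..<K}). P b * g (b(x := k)))\<bar> \<le> \<bar>p x k - q x k\<bar>"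
          by (simp add: abs_mult mult_left_le)
      qed
      finally show ?thesis .
    qed
    have t2: "\<bar>\<Sum>k<K. q x k * (\<Sum>b\<in>PiE I (\<lambda>_. {..<K}). (P b - Q b) * g (b(x := k)))\<bar> \<le> S"
    proof -
      have "\<bar>\<Sum>k<K. q x k * (\<Sum>b\<in>PiE I (\<lambda>_. {..<K}). (P b - Q b) * g (b(x := k)))\<bar>
          \<le> (\<Sum>k<K. \<bar>q x k * (\<Sum>b\<in>PiE I (\<lambda>_. {..<K}). (P b - Q b) * g (b(x := k)))\<bar>)" by (rule sum_abs)
      also have "\<dots> \<le> (\<Sum>k<K. q x k * S)"
      proof (intro sum_mono)
        fix k assume k: "k \<in> {..<K}"
        have "\<bar>\<Sum>b\<in>PiE I (\<lambda>_. {..<K}). (P b - Q b) * g (b(x := k))\<bar> \<le> S"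
          unfolding P_def Q_def S_def using insert.IH[OF pI qI] gk k by auto
        moreover have "q x k \<ge> 0" using qx k by (auto simp: insimp_def)
        ultimately show "\<bar>q x k * (\<Sum>b\<in>PiE I (\<lambda>_. {..<K}). (P b - Q b) * g (b(x := k)))\<bar> \<le> q x k * S"
          by (simp add: abs_mult mult_left_mono)
      qed
      also have "\<dots> = S" using qx by (simp add: insimp_def sum_distrib_right[symmetric])
      finally show ?thesis .
    qed
    show "\<bar>\<Sum>b\<in>PiE (insert x I) (\<lambda>_. {..<K}). ((\<Prod>i\<in>insert x I. p i (b i)) - (\<Prod>i\<in>insert x I. q i (b i))) * g b\<bar>
       \<le> (\<Sum>i\<in>insert x I. \<Sum>k<K. \<bar>p i k - q i k\<bar>)"
      unfolding eq using t1 t2 insert.hyps by (simp add: S_def) 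
  qed
qed

lemma G2:
  fixes w :: "nat \<Rightarrow> nat \<Rightarrow> real"
  assumes "j < J"
  shows "(\<Sum>a\<in>profiles J K. (\<Prod>i<J. w i (a i)) * g a)
       = (\<Sum>l<K. w j l * (\<Sum>b\<in>others J K j. (\<Prod>i\<in>{..<J} - {j}. w i (b i)) * g (b(j := l))))"
proof -
  have e: "{..<J} = insert j ({..<J} - {j})" using assms by auto
  have fin: "finite ({..<J} - {j})" and nj: "j \<notin> {..<J} - {j}" by auto
  have "(\<Sum>a\<in>profiles J K. (\<Prod>i<J. w i (a i)) * g a)
      = (\<Sum>a\<in>PiE (insert j ({..<J} - {j})) (\<lambda>_. {..<K}). (\<Prod>i\<in>insert j ({..<J} - {j}). w i (a i)) * g a)"
    unfolding profiles_def using e by simp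
  also have "\<dots> = (\<Sum>l<K. \<Sum>b\<in>others J K j. (w j l * (\<Prod>i\<in>{..<J} - {j}. w i (b i))) * g (b(j := l)))"
    unfolding others_def sum_PiE_insert[OF fin nj] prod_upd_insert[OF fin nj] ..
  also have "\<dots> = (\<Sum>l<K. w j l * (\<Sum>b\<in>others J K j. (\<Prod>i\<in>{..<J} - {j}. w i (b i)) * g (b(j := l))))"
    by (intro sum.cong refl) (simp add: sum_distrib_left mult.assoc)
  finally show ?thesis .
qed

lemma ip_sum: "finite B \<Longrightarrow> ip d (\<lambda>l. \<Sum>b\<in>B. c b * v b l) z = (\<Sum>b\<in>B. c b * ip d (v b) z)"
  unfolding ip_def by (simp add: sum_distrib_right sum_distrib_left mult.assoc) (rule sum.swap)

lemma ip_Phi: "ip d (Phi J K phi W j k) z =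
   (\<Sum>b\<in>others J K j. (\<Prod>i\<in>{..<J} - {j}. W i (b i)) * ip d (phi j (b(j := k))) z)"
  unfolding Phi_def others_def by (rule ip_sum) (auto intro: finite_PiE)



lemma SS_shift:
  assumes "\<forall>k<K. \<bar>v k - v' k\<bar> \<le> B" "eta \<ge> 0"
  shows "SS K eta v \<le> exp (eta * B) * SS K eta v'"
proof -
  have "SS K eta v \<le> (\<Sum>k<K. exp (eta * B) * exp (- eta * v' k))"
    unfolding SS_def
  proof (intro sum_mono)
    fix k assume "k \<in> {..<K}"
    hence "v' k - v k \<le> B" using assms(1) by fastforce
    hence "eta * (v' k - v k) \<le> eta * B" using assms(2) by (rule mult_left_mono)
    hence "- eta * v k \<le> eta * B + - eta * v' k" by (simp add: algebra_simps)
    thus "exp (- eta * v k) \<le> exp (eta * B) * exp (- eta * v' k)" by (simp flip: exp_add)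
  qed
  thus ?thesis by (simp add: SS_def sum_distrib_left)
qed

lemma smx_stab:
  assumes K: "K \<ge> 1" and vb: "\<forall>k<K. \<bar>v k - v' k\<bar> \<le> B" and eta: "eta \<ge> 0"
  shows "(\<Sum>k<K. \<bar>smx K eta v k - smx K eta v' k\<bar>) \<le> (exp (2 * eta * B) - 1) * exp (2 * eta * B)"
proof -
  define E where "E = exp (2 * eta * B)"
  have vb': "\<forall>k<K. \<bar>v' k - v k\<bar> \<le> B" using vb by (simp add: abs_minus_commute)
  have "\<bar>v 0 - v' 0\<bar> \<le> B" using vb K by auto
  hence B: "B \<ge> 0" by (meson abs_ge_zero order_trans)
  hence E1: "E \<ge> 1" unfolding E_def using eta by simp
  have s1: "SS K eta v \<le> exp (eta * B) * SS K eta v'" by (rule SS_shift[OF vb eta])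
  have s2: "SS K eta v' \<le> exp (eta * B) * SS K eta v" by (rule SS_shift[OF vb' eta])
  have P: "SS K eta v > 0" "SS K eta v' > 0" using SS_pos[OF K] by auto
  have gen: "smx K eta u k \<le> E * smx K eta u' k"
    if k: "k < K" and ub: "\<forall>k<K. \<bar>u k - u' k\<bar> \<le> B" and sa: "SS K eta u' \<le> exp (eta * B) * SS K eta u"
      and pu: "SS K eta u > 0" "SS K eta u' > 0" for u u' k
  proof -
    have "u' k - u k \<le> B" using ub k by fastforce
    hence "eta * (u' k - u k) \<le> eta * B" using eta by (rule mult_left_mono)
    hence "- eta * u k \<le> eta * B + - eta * u' k" by (simp add: algebra_simps)
    hence n: "exp (- eta * u k) \<le> exp (eta * B) * exp (- eta * u' k)" by (simp flip: exp_add)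
    have "smx K eta u k = exp (- eta * u k) / SS K eta u" by (simp add: smx_def)
    also have "\<dots> \<le> exp (eta * B) * exp (- eta * u' k) / SS K eta u"
      using n pu by (intro divide_right_mono) auto
    also have "\<dots> \<le> exp (eta * B) * exp (- eta * u' k) / (SS K eta u' / exp (eta * B))"
      using sa pu by (intro divide_left_mono) (auto simp: field_simps)
    also have "\<dots> = E * smx K eta u' k" unfolding E_def smx_def
      by (simp add: field_simps flip: exp_add)
    finally show ?thesis .
  qed
  have "(\<Sum>k<K. \<bar>smx K eta v k - smx K eta v' k\<bar>) \<le> (\<Sum>k<K. (E - 1) * E * smx K eta v' k)"
  proof (intro sum_mono)
    fix k assume "k \<in> {..<K}"
    hence k: "k < K" by simp
    have a: "smx K eta v k \<le> E * smx K eta v' k" using gen[OF k vb s2 P] .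
    have b: "smx K eta v' k \<le> E * smx K eta v k" using gen[OF k vb' s1 P(2) P(1)] .
    have nn: "smx K eta v k \<ge> 0" "smx K eta v' k \<ge> 0" using smx_simplex[OF K] k by auto
    have "smx K eta v k - smx K eta v' k \<le> (E - 1) * E * smx K eta v' k"
    proof -
      have "(E - 1) * smx K eta v' k \<le> (E - 1) * E * smx K eta v' k"
        unfolding mult.assoc using E1 nn by (intro mult_left_mono) (auto simp: mult_le_cancel_right1)
      thus ?thesis using a by (simp add: algebra_simps)
    qed
    moreover have "smx K eta v' k - smx K eta v k \<le> (E - 1) * E * smx K eta v' k"
    proof -
      have "smx K eta v' k - smx K eta v k \<le> (E - 1) * smx K eta v k" using b by (simp add: algebra_simps)
      also have "\<dots> \<le> (E - 1) * (E * smx K eta v' k)" using a E1 by (intro mult_left_mono) auto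
      finally show ?thesis by (simp add: mult.assoc)
    qed
    ultimately show "\<bar>smx K eta v k - smx K eta v' k\<bar> \<le> (E - 1) * E * smx K eta v' k" by linarith
  qed
  also have "\<dots> = (E - 1) * E" using smx_simplex[OF K, of eta v'] by (simp add: sum_distrib_left[symmetric])
  finally show ?thesis unfolding E_def .
qed

lemma stab_eta:
  fixes eta :: real
  assumes "eta \<ge> 0" "12 * eta \<le> 1"
  shows "(exp (2 * eta * 3) - 1) * exp (2 * eta * 3) \<le> 24 * eta"
proof -
  have e: "exp (6 * eta) \<le> 1 + 6 * eta + (6 * eta)^2" using exp_bound[of "6*eta"] assms by auto
  have "(6 * eta) * (6 * eta) \<le> (6 * eta) * 1" using assms by (intro mult_left_mono) auto
  hence "(6 * eta)^2 \<le> 6 * eta" by (simp add: power2_eq_square)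
  hence e2: "exp (6 * eta) \<le> 1 + 12 * eta" using e by linarith
  hence e3: "exp (6 * eta) \<le> 2" using assms by linarith
  have "(exp (6 * eta) - 1) * exp (6 * eta) \<le> (12 * eta) * 2"
    using e2 e3 assms by (intro mult_mono) auto
  thus ?thesis by (simp add: mult.commute)
qed



lemma Apot_le:
  assumes K: "K \<ge> 1" and eta: "eta > 0" and u: "insimp K u"
  shows "Apot K eta v \<le> (\<Sum>l<K. u l * v l) + ln (real K) / eta"
proof -
  have each: "Apot K eta v \<le> v l + ln (real K) / eta" if l: "l < K" for l
  proof -
    have "exp (- eta * v l) \<le> SS K eta v" unfolding SS_def
      using l by (intro member_le_sum) auto
    hence "- eta * v l \<le> ln (SS K eta v)" using SS_pos[OF K] by (simp add: ln_ge_iff)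
    hence "- eta * v l - ln (real K) \<le> ln (SS K eta v / real K)"
      using SS_pos[OF K, of eta v] K by (simp add: ln_div)
    hence "- ln (SS K eta v / real K) \<le> eta * v l + ln (real K)" by linarith
    hence "- ln (SS K eta v / real K) / eta \<le> (eta * v l + ln (real K)) / eta"
      using eta by (intro divide_right_mono) auto
    thus ?thesis using eta unfolding Apot_def by (simp add: add_divide_distrib)
  qed
  have "Apot K eta v = (\<Sum>l<K. u l * Apot K eta v)"
    using u by (simp add: insimp_def sum_distrib_right[symmetric])
  also have "\<dots> \<le> (\<Sum>l<K. u l * (v l + ln (real K) / eta))"
    using u each by (intro sum_mono mult_left_mono) (auto simp: insimp_def)
  also have "\<dots> = (\<Sum>l<K. u l * v l) + ln (real K) / eta"
  proof -
    define c where "c = ln (real K) / eta"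
    have "(\<Sum>l<K. u l * (v l + c)) = (\<Sum>l<K. u l * v l) + (\<Sum>l<K. u l) * c"
      by (simp add: sum.distrib sum_distrib_right distrib_left)
    thus ?thesis using u by (simp add: insimp_def c_def)
  qed
  finally show ?thesis .
qed

lemma Apot_zero: "K \<ge> 1 \<Longrightarrow> Apot K eta (\<lambda>_. 0) = 0"
  unfolding Apot_def SS_def by simp

locale game =
  fixes J K d :: nat and phi :: "nat \<Rightarrow> (nat \<Rightarrow> nat) \<Rightarrow> nat \<Rightarrow> real"
    and Zs :: "nat \<Rightarrow> nat \<Rightarrow> real" and preds :: "nat \<Rightarrow> nat \<Rightarrow> nat \<Rightarrow> real"
    and eta :: real and T :: nat
  assumes K1: "K \<ge> 1"
    and bnd: "\<forall>j<J. \<forall>a\<in>profiles J K. \<forall>t<T. \<bar>ip d (phi j a) (Zs t)\<bar> \<le> 1"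
begin

definition "st t = pomwu_state J K d phi Zs preds eta t"
definition "W t i = pomwu_play J K d phi Zs preds eta t i"
definition "loss t j l = ip d (Phi J K phi (W t) j l) (Zs t)"
definition "cum j z t l = (\<Sum>s<t. if Zs s = z then loss s j l else 0)"
definition "prv z t = Max {s. s < t \<and> Zs s = z}"
definition "hint j z t l = ip d (snd (st t) j z l) z"
definition "V j z t l = cum j z t l + hint j z t l"

lemma W_st: "W t = (\<lambda>j. mwu_play K d eta (fst (st t) j) (snd (st t) j) (preds j t))"
  by (auto simp: W_def pomwu_play_def st_def Let_def)

lemma st_Suc_fst: "fst (st (Suc t)) j z l =
   (if z = Zs t then fst (st t) j z l * exp (- eta * loss t j l) else fst (st t) j z l)"
  by (simp add: st_def Let_def loss_def W_st)

lemma st_Suc_snd: "snd (st (Suc t)) j z =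
   (if z = Zs t then Phi J K phi (W t) j else snd (st t) j z)"
  by (auto simp: st_def Let_def W_st)

lemma cum_Suc: "cum j z (Suc t) l = cum j z t l + (if Zs t = z then loss t j l else 0)"
  unfolding cum_def by simp

lemma fst_st: "fst (st t) j z l = exp (- eta * cum j z t l) / real K"
proof (induction t)
  case 0
  then show ?case by (simp add: st_def cum_def)
next
  case (Suc t)
  then show ?case by (auto simp: st_Suc_fst cum_Suc algebra_simps simp flip: exp_add)
qed

lemma prv_props:
  assumes "\<exists>s<t. Zs s = z"
  shows "prv z t < t" "Zs (prv z t) = z" "\<And>s'. prv z t < s' \<Longrightarrow> s' < t \<Longrightarrow> Zs s' \<noteq> z"
proof -
  have fin: "finite {s. s < t \<and> Zs s = z}" by simp
  have ne: "{s. s < t \<and> Zs s = z} \<noteq> {}" using assms by auto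
  have m: "prv z t \<in> {s. s < t \<and> Zs s = z}" unfolding prv_def using Max_in[OF fin ne] .
  thus "prv z t < t" "Zs (prv z t) = z" by auto
  fix s' assume a: "prv z t < s'" "s' < t"
  show "Zs s' \<noteq> z"
  proof
    assume "Zs s' = z"
    hence "s' \<le> prv z t" unfolding prv_def using a by (intro Max_ge[OF fin]) auto
    thus False using a by simp
  qed
qed

lemma prv_Suc: "prv (Zs t) (Suc t) = t"
  unfolding prv_def by (rule Max_eqI) auto

lemma snd_st: "snd (st t) j z = (if \<exists>s<t. Zs s = z then Phi J K phi (W (prv z t)) j else (\<lambda>l _. 0))"
proof (induction t)
  case 0
  then show ?case by (simp add: st_def)
next
  case (Suc t)
  show ?case
  proof (cases "z = Zs t")
    case True
    then show ?thesis using prv_Suc[of t] by (auto simp: st_Suc_snd)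
  next
    case False
    have e: "{s. s < Suc t \<and> Zs s = z} = {s. s < t \<and> Zs s = z}" using False less_Suc_eq by auto
    have "(\<exists>s<Suc t. Zs s = z) = (\<exists>s<t. Zs s = z)" using False less_Suc_eq by auto
    moreover have "prv z (Suc t) = prv z t" unfolding prv_def e ..
    ultimately show ?thesis using Suc False by (auto simp: st_Suc_snd)
  qed
qed

lemma hint_eq: "hint j z t l = (if \<exists>s<t. Zs s = z then loss (prv z t) j l else 0)"
  using prv_props(2)[of t z] unfolding hint_def loss_def snd_st by (auto simp: ip_def)

lemma W_smx: "W t j = smx K eta (V j (preds j t) t)"
proof
  fix l
  have Kp: "real K > 0" using K1 by simp
  have e: "\<And>k. fst (st t) j (preds j t) k * exp (- eta * ip d (snd (st t) j (preds j t) k) (preds j t))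
      = exp (- eta * V j (preds j t) t k) / real K"
    unfolding fst_st V_def hint_def by (simp add: algebra_simps flip: exp_add)
  show "W t j l = smx K eta (V j (preds j t) t) l"
    unfolding W_st mwu_play_def e smx_def SS_def using Kp
    by (simp add: sum_divide_distrib[symmetric])
qed

lemma W_simp: "insimp K (W t j)"
  unfolding W_smx insimp_def using smx_simplex[OF K1] by auto

definition "X t j = smx K eta (V j (Zs t) t)"

lemma W_X: "preds j t = Zs t \<Longrightarrow> W t j = X t j"
  unfolding W_smx X_def by simp

lemma X_simp: "insimp K (X t j)"
  unfolding X_def insimp_def using smx_simplex[OF K1] by auto

lemma loss_eq: "loss t j l = (\<Sum>b\<in>others J K j. (\<Prod>i\<in>{..<J} - {j}. W t i (b i)) * ip d (phi j (b(j := l))) (Zs t))"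
  unfolding loss_def ip_Phi ..

lemma loss_bnd: assumes "t < T" "j < J" "l < K" shows "\<bar>loss t j l\<bar> \<le> 1"
  unfolding loss_eq others_def
proof (rule G0)
  show "finite ({..<J} - {j})" by simp
  show "\<forall>i\<in>{..<J} - {j}. insimp K (W t i)" using W_simp by auto
  show "\<forall>b\<in>PiE ({..<J} - {j}) (\<lambda>_. {..<K}). \<bar>ip d (phi j (b(j := l))) (Zs t)\<bar> \<le> 1"
    using bnd assms upd_others[of _ J K j l] unfolding others_def by auto
qed

lemma loss_diff:
  assumes "t < T" "s < T" "j < J" "l < K" "Zs s = Zs t"
  shows "\<bar>loss t j l - loss s j l\<bar> \<le> (\<Sum>i\<in>{..<J} - {j}. \<Sum>k<K. \<bar>W t i k - W s i k\<bar>)"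
proof -
  have eq: "loss t j l - loss s j l = (\<Sum>b\<in>PiE ({..<J} - {j}) (\<lambda>_. {..<K}).
      ((\<Prod>i\<in>{..<J} - {j}. W t i (b i)) - (\<Prod>i\<in>{..<J} - {j}. W s i (b i))) * ip d (phi j (b(j := l))) (Zs t))"
    unfolding loss_eq others_def assms(5) by (simp only: sum_subtractf[symmetric] left_diff_distrib)
  have "\<bar>\<Sum>b\<in>PiE ({..<J} - {j}) (\<lambda>_. {..<K}).
      ((\<Prod>i\<in>{..<J} - {j}. W t i (b i)) - (\<Prod>i\<in>{..<J} - {j}. W s i (b i))) * ip d (phi j (b(j := l))) (Zs t)\<bar>
        \<le> (\<Sum>i\<in>{..<J} - {j}. \<Sum>k<K. \<bar>W t i k - W s i k\<bar>)"
  proof -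
    have g: "\<forall>b\<in>PiE ({..<J} - {j}) (\<lambda>_. {..<K}). \<bar>ip d (phi j (b(j := l))) (Zs t)\<bar> \<le> 1"
      using bnd assms upd_others[of _ J K j l] unfolding others_def by auto
    have ws: "\<forall>i\<in>{..<J} - {j}. insimp K (W t i)" "\<forall>i\<in>{..<J} - {j}. insimp K (W s i)"
      using W_simp by auto
    have "finite ({..<J} - {j})" by simp
    from G1[OF this ws, rule_format, of "\<lambda>b. ip d (phi j (b(j := l))) (Zs t)"] g
    show ?thesis by simp
  qed
  thus ?thesis unfolding eq .
qed

lemma hint_bnd: assumes "t \<le> T" "j < J" "l < K" shows "\<bar>hint j z t l\<bar> \<le> 1"
proof (cases "\<exists>s<t. Zs s = z")
  case True
  have "prv z t < T" using prv_props(1)[OF True] assms by simp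
  hence "\<bar>loss (prv z t) j l\<bar> \<le> 1" using assms by (intro loss_bnd) auto
  thus ?thesis using True unfolding hint_eq by simp
next
  case False
  hence "hint j z t l = 0" unfolding hint_eq by (simp only: if_not_P[OF False] if_False)
  thus ?thesis by simp
qed

lemma cum_gap:
  assumes "s < t" "\<And>s'. s < s' \<Longrightarrow> s' < t \<Longrightarrow> Zs s' \<noteq> z"
  shows "cum j z t l = cum j z (Suc s) l"
  using assms
proof (induction t)
  case 0 then show ?case by simp
next
  case (Suc t)
  show ?case
  proof (cases "s = t")
    case True then show ?thesis by simp
  next
    case False
    hence st: "s < t" using Suc.prems by simp
    have "Zs t \<noteq> z" using Suc.prems st by auto
    hence "cum j z (Suc t) l = cum j z t l" by (simp add: cum_Suc)
    also have "\<dots> = cum j z (Suc s) l" using Suc.IH st Suc.prems by auto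
    finally show ?thesis .
  qed
qed

lemma V_diff:
  assumes ex: "\<exists>s<t. Zs s = Zs t" and t: "t < T" and j: "j < J" and l: "l < K"
  shows "\<bar>V j (Zs t) t l - V j (Zs t) (prv (Zs t) t) l\<bar> \<le> 3"
proof -
  define s where "s = prv (Zs t) t"
  have s: "s < t" "Zs s = Zs t" "\<And>s'. s < s' \<Longrightarrow> s' < t \<Longrightarrow> Zs s' \<noteq> Zs t"
    using prv_props[OF ex] unfolding s_def by auto
  have c: "cum j (Zs t) t l = cum j (Zs t) s l + loss s j l"
    using cum_gap[OF s(1) s(3)] s(2) by (simp add: cum_Suc)
  have h: "hint j (Zs t) t l = loss s j l" using ex unfolding hint_eq s_def by simp
  have "V j (Zs t) t l - V j (Zs t) s l = 2 * loss s j l - hint j (Zs t) s l"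
    unfolding V_def c h by simp
  moreover have "\<bar>loss s j l\<bar> \<le> 1" using loss_bnd s t j l by auto
  moreover have "\<bar>hint j (Zs t) s l\<bar> \<le> 1" using hint_bnd s t j l by auto
  ultimately show ?thesis unfolding s_def by linarith
qed

end


context game begin

lemma cum0: "cum j z 0 = (\<lambda>_. 0)"
  by (auto simp: cum_def)

lemma cum_Suc_fun: "cum j z (Suc t) = (\<lambda>l. cum j z t l + (if Zs t = z then loss t j l else 0))"
  by (auto simp: cum_Suc)

lemma virtual_regret:
  assumes eta: "eta > 0" and j: "j < J"
    and u: "\<forall>t<T. insimp K (u (Zs t))"
    and Dt: "\<forall>t<T. \<forall>l<K. \<bar>loss t j l - hint j (Zs t) t l\<bar> \<le> Dt t"
    and eD: "\<forall>t<T. eta * Dt t \<le> 1"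
  shows "(\<Sum>t<T. (\<Sum>l<K. X t j l * loss t j l)) \<le>
         (\<Sum>t<T. (\<Sum>l<K. u (Zs t) l * loss t j l)) + real (card (Zs ` {..<T})) * ln (real K) / eta
         + eta * (\<Sum>t<T. (Dt t)^2)"
proof -
  define Zc where "Zc = Zs ` {..<T}"
  have finZ: "finite Zc" unfolding Zc_def by simp
  define Pot where "Pot t = (\<Sum>z\<in>Zc. Apot K eta (cum j z t))" for t
  have step: "(\<Sum>l<K. X t j l * loss t j l) \<le> eta * (Dt t)^2 + (Pot (Suc t) - Pot t)" if t: "t < T" for t
  proof -
    have hs: "(\<Sum>k<K. smx K eta (\<lambda>k. cum j (Zs t) t k + hint j (Zs t) t k) k * loss t j k)
        + Apot K eta (cum j (Zs t) t) - Apot K eta (\<lambda>k. cum j (Zs t) t k + loss t j k) \<le> eta * (Dt t)^2"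
    proof -
      have "(\<Sum>k<K. smx K eta (\<lambda>k. cum j (Zs t) t k + hint j (Zs t) t k) k * loss t j k)
        + Apot K eta (\<lambda>k. cum j (Zs t) t k) - Apot K eta (\<lambda>k. cum j (Zs t) t k + loss t j k) \<le> eta * (Dt t)^2"
        using t Dt eD by (intro hedge_step[OF K1 eta]) auto
      thus ?thesis by simp
    qed
    have x: "X t j = smx K eta (\<lambda>k. cum j (Zs t) t k + hint j (Zs t) t k)"
      unfolding X_def V_def ..
    have c: "(\<lambda>k. cum j (Zs t) t k + loss t j k) = cum j (Zs t) (Suc t)"
      by (simp add: cum_Suc_fun)
    have p: "Pot (Suc t) - Pot t = Apot K eta (cum j (Zs t) (Suc t)) - Apot K eta (cum j (Zs t) t)"
    proof -
      have "Pot (Suc t) - Pot t = (\<Sum>z\<in>Zc. Apot K eta (cum j z (Suc t)) - Apot K eta (cum j z t))"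
        unfolding Pot_def by (simp add: sum_subtractf)
      also have "\<dots> = (\<Sum>z\<in>Zc. if Zs t = z then Apot K eta (cum j z (Suc t)) - Apot K eta (cum j z t) else 0)"
        by (intro sum.cong refl) (auto simp: cum_Suc_fun)
      also have "\<dots> = Apot K eta (cum j (Zs t) (Suc t)) - Apot K eta (cum j (Zs t) t)"
        using t finZ unfolding Zc_def by (subst sum.delta') auto
      finally show ?thesis .
    qed
    show ?thesis using hs unfolding x c p by linarith
  qed
  have "(\<Sum>t<T. (\<Sum>l<K. X t j l * loss t j l)) \<le> (\<Sum>t<T. eta * (Dt t)^2 + (Pot (Suc t) - Pot t))"
    using step by (intro sum_mono) auto
  also have "\<dots> = eta * (\<Sum>t<T. (Dt t)^2) + (Pot T - Pot 0)"
    by (simp add: sum.distrib sum_distrib_left sum_lessThan_telescope)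
  also have "Pot 0 = 0" unfolding Pot_def cum0 using Apot_zero[OF K1] by simp
  also have "Pot T \<le> (\<Sum>z\<in>Zc. (\<Sum>l<K. u z l * cum j z T l) + ln (real K) / eta)"
    unfolding Pot_def
  proof (intro sum_mono)
    fix z assume "z \<in> Zc"
    then obtain t where "t < T" "z = Zs t" unfolding Zc_def by auto
    hence "insimp K (u z)" using u by auto
    thus "Apot K eta (cum j z T) \<le> (\<Sum>l<K. u z l * cum j z T l) + ln (real K) / eta"
      by (rule Apot_le[OF K1 eta])
  qed
  also have "(\<Sum>z\<in>Zc. (\<Sum>l<K. u z l * cum j z T l) + ln (real K) / eta)
      = (\<Sum>z\<in>Zc. (\<Sum>l<K. u z l * cum j z T l)) + real (card Zc) * ln (real K) / eta"
    by (simp add: sum.distrib)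
  also have "(\<Sum>z\<in>Zc. (\<Sum>l<K. u z l * cum j z T l)) = (\<Sum>t<T. (\<Sum>l<K. u (Zs t) l * loss t j l))"
  proof -
    have "\<And>z. (\<Sum>l<K. u z l * cum j z T l) = (\<Sum>s<T. if Zs s = z then (\<Sum>l<K. u z l * loss s j l) else 0)"
    proof -
      fix z
      have "(\<Sum>l<K. u z l * cum j z T l) = (\<Sum>l<K. \<Sum>s<T. if Zs s = z then u z l * loss s j l else 0)"
        unfolding cum_def by (simp add: sum_distrib_left if_distrib cong: if_cong)
      also have "\<dots> = (\<Sum>s<T. \<Sum>l<K. if Zs s = z then u z l * loss s j l else 0)"
        by (rule sum.swap)
      also have "\<dots> = (\<Sum>s<T. if Zs s = z then (\<Sum>l<K. u z l * loss s j l) else 0)"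
        by (intro sum.cong refl) auto
      finally show "(\<Sum>l<K. u z l * cum j z T l) = (\<Sum>s<T. if Zs s = z then (\<Sum>l<K. u z l * loss s j l) else 0)" .
    qed
    hence "(\<Sum>z\<in>Zc. (\<Sum>l<K. u z l * cum j z T l))
        = (\<Sum>z\<in>Zc. \<Sum>s<T. if Zs s = z then (\<Sum>l<K. u z l * loss s j l) else 0)" by simp
    also have "\<dots> = (\<Sum>s<T. \<Sum>z\<in>Zc. if Zs s = z then (\<Sum>l<K. u z l * loss s j l) else 0)"
      by (rule sum.swap)
    also have "\<dots> = (\<Sum>s<T. (\<Sum>l<K. u (Zs s) l * loss s j l))"
      using finZ unfolding Zc_def by (intro sum.cong refl) (subst sum.delta', auto)
    finally show ?thesis .
  qed
  finally show ?thesis unfolding Zc_def by simp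
qed

end


lemma simp_abs:
  assumes "insimp K w" "\<forall>l<K. \<bar>f l\<bar> \<le> 1"
  shows "\<bar>\<Sum>l<K. w l * f l\<bar> \<le> 1"
proof -
  have "\<bar>\<Sum>l<K. w l * f l\<bar> \<le> (\<Sum>l<K. \<bar>w l * f l\<bar>)" by (rule sum_abs)
  also have "\<dots> \<le> (\<Sum>l<K. w l)"
  proof (intro sum_mono)
    fix l assume "l \<in> {..<K}"
    hence "w l \<ge> 0" "\<bar>f l\<bar> \<le> 1" using assms by (auto simp: insimp_def)
    thus "\<bar>w l * f l\<bar> \<le> w l" by (simp add: abs_mult mult_left_le)
  qed
  also have "\<dots> = 1" using assms by (simp add: insimp_def)
  finally show ?thesis .
qed

lemma sum_if_const: fixes T :: nat shows "(\<Sum>t<T. if P t then (c::real) else 0) = c * real (card {t. t < T \<and> P t})"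
proof -
  have "(\<Sum>t<T. if P t then c else 0) = (\<Sum>t\<in>{t \<in> {..<T}. P t}. c)"
    by (subst sum.inter_filter) auto
  also have "{t \<in> {..<T}. P t} = {t. t < T \<and> P t}" by auto
  finally show ?thesis by simp
qed

context game begin

lemma prv_ge: "s < t \<Longrightarrow> Zs s = z \<Longrightarrow> s \<le> prv z t"
  unfolding prv_def by (intro Max_ge) auto

definition "good j t \<longleftrightarrow> (\<exists>s<t. Zs s = Zs t) \<and>
   (\<forall>i<J. i \<noteq> j \<longrightarrow> preds i t = Zs t \<and> preds i (prv (Zs t) t) = Zs t)"

definition "Lc i = card {t. t < T \<and> preds i t \<noteq> Zs t}"

lemma W_minus_X:
  assumes j: "j < J"
  shows "(\<Sum>t<T. (\<Sum>l<K. W t j l * loss t j l) - (\<Sum>l<K. X t j l * loss t j l)) \<le> 2 * real (Lc j)"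
proof -
  have "(\<Sum>t<T. (\<Sum>l<K. W t j l * loss t j l) - (\<Sum>l<K. X t j l * loss t j l))
     \<le> (\<Sum>t<T. if preds j t \<noteq> Zs t then 2 else 0)"
  proof (intro sum_mono)
    fix t assume t: "t \<in> {..<T}"
    show "(\<Sum>l<K. W t j l * loss t j l) - (\<Sum>l<K. X t j l * loss t j l) \<le> (if preds j t \<noteq> Zs t then 2 else 0)"
    proof (cases "preds j t = Zs t")
      case True then show ?thesis using W_X by simp
    next
      case False
      have lb: "\<forall>l<K. \<bar>loss t j l\<bar> \<le> 1" using loss_bnd t j by auto
      have "\<bar>\<Sum>l<K. W t j l * loss t j l\<bar> \<le> 1" using simp_abs[OF W_simp lb] .
      moreover have "\<bar>\<Sum>l<K. X t j l * loss t j l\<bar> \<le> 1" using simp_abs[OF X_simp lb] .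
      ultimately have "(\<Sum>l<K. W t j l * loss t j l) - (\<Sum>l<K. X t j l * loss t j l) \<le> 2" by linarith
      thus ?thesis using False by simp
    qed
  qed
  also have "\<dots> = 2 * real (Lc j)" unfolding Lc_def by (rule sum_if_const)
  finally show ?thesis .
qed

lemma good_bound:
  assumes eta: "eta > 0" and small: "576 * eta^2 * real J \<le> 1" and j: "j < J" and t: "t < T" and g: "good j t"
    and l: "l < K"
  shows "\<bar>loss t j l - hint j (Zs t) t l\<bar> \<le> 24 * eta * real J"
proof -
  have ex: "\<exists>s<t. Zs s = Zs t" using g unfolding good_def by auto
  define s where "s = prv (Zs t) t"
  have s: "s < t" "Zs s = Zs t" using prv_props[OF ex] unfolding s_def by auto
  have h: "hint j (Zs t) t l = loss s j l" using ex unfolding hint_eq s_def by simp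
  have e12: "12 * eta \<le> 1"
  proof -
    have J1: "real J \<ge> 1" using j by simp
    have "576 * eta^2 * 1 \<le> 576 * eta^2 * real J" using J1 by (intro mult_left_mono) auto
    moreover have "(24 * eta)^2 = 576 * eta^2 * 1" by (simp add: power2_eq_square)
    ultimately have "(24 * eta)^2 \<le> 1^2" using small by simp
    hence "24 * eta \<le> 1" by (rule power2_le_imp_le) simp
    thus ?thesis by simp
  qed
  have each: "(\<Sum>k<K. \<bar>W t i k - W s i k\<bar>) \<le> 24 * eta" if i: "i \<in> {..<J} - {j}" for i
  proof -
    have "W t i = X t i" using g i unfolding good_def by (intro W_X) auto
    moreover have "W s i = X s i" using g i s unfolding good_def s_def by (intro W_X) auto
    ultimately have "(\<Sum>k<K. \<bar>W t i k - W s i k\<bar>) = (\<Sum>k<K. \<bar>smx K eta (V i (Zs t) t) k - smx K eta (V i (Zs t) s) k\<bar>)"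
      unfolding X_def s(2) by simp
    also have "\<dots> \<le> (exp (2 * eta * 3) - 1) * exp (2 * eta * 3)"
      using V_diff[OF ex t, of i] i unfolding s_def by (intro smx_stab[OF K1]) (use eta in auto)
    also have "\<dots> \<le> 24 * eta" using stab_eta eta e12 by simp
    finally show ?thesis .
  qed
  have "\<bar>loss t j l - loss s j l\<bar> \<le> (\<Sum>i\<in>{..<J} - {j}. \<Sum>k<K. \<bar>W t i k - W s i k\<bar>)"
    using s t j l by (intro loss_diff) auto
  also have "\<dots> \<le> (\<Sum>i\<in>{..<J} - {j}. 24 * eta)" using each by (intro sum_mono) auto
  also have "\<dots> = real (card ({..<J} - {j})) * (24 * eta)" by simp
  also have "\<dots> \<le> real J * (24 * eta)"
  proof (intro mult_right_mono)
    have "card ({..<J} - {j}) \<le> card {..<J}" by (intro card_mono) auto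
    thus "real (card ({..<J} - {j})) \<le> real J" by simp
  qed (use eta in auto)
  finally show ?thesis unfolding h by (simp add: mult_ac)
qed

end


context game begin

lemma bad_count:
  assumes j: "j < J"
  shows "card {t. t < T \<and> \<not> good j t} \<le> card (Zs ` {..<T}) + 2 * (\<Sum>i<J. Lc i)"
proof -
  define Fs where "Fs = {t. t < T \<and> \<not> (\<exists>s<t. Zs s = Zs t)}"
  define Wr where "Wr i = {t. t < T \<and> preds i t \<noteq> Zs t}" for i
  define P where "P i = {t. t < T \<and> (\<exists>s<t. Zs s = Zs t) \<and> preds i (prv (Zs t) t) \<noteq> Zs t}" for i
  have sub: "{t. t < T \<and> \<not> good j t} \<subseteq> Fs \<union> (\<Union>i<J. Wr i) \<union> (\<Union>i<J. P i)"
    unfolding Fs_def Wr_def P_def good_def by auto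
  have cF: "card Fs \<le> card (Zs ` {..<T})"
  proof -
    have "inj_on Zs Fs"
    proof (rule inj_onI)
      fix x y assume x: "x \<in> Fs" and y: "y \<in> Fs" and e: "Zs x = Zs y"
      show "x = y"
      proof (rule ccontr)
        assume "x \<noteq> y"
        hence "x < y \<or> y < x" by auto
        thus False using x y e unfolding Fs_def by auto
      qed
    qed
    moreover have "Zs ` Fs \<subseteq> Zs ` {..<T}" unfolding Fs_def by auto
    ultimately show ?thesis by (metis card_image card_mono finite_imageI finite_lessThan)
  qed
  have cP: "card (P i) \<le> card (Wr i)" for i
  proof -
    have "inj_on (\<lambda>t. prv (Zs t) t) (P i)"
    proof (rule inj_onI)
      fix x y assume x: "x \<in> P i" and y: "y \<in> P i" and e: "prv (Zs x) x = prv (Zs y) y"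
      have ex: "\<exists>s<x. Zs s = Zs x" "\<exists>s<y. Zs s = Zs y" using x y unfolding P_def by auto
      have zx: "Zs (prv (Zs x) x) = Zs x" "prv (Zs x) x < x" using prv_props[OF ex(1)] by auto
      have zy: "Zs (prv (Zs y) y) = Zs y" "prv (Zs y) y < y" using prv_props[OF ex(2)] by auto
      have zxy: "Zs x = Zs y" using zx zy e by metis
      show "x = y"
      proof (rule ccontr)
        assume "x \<noteq> y"
        hence "x < y \<or> y < x" by auto
        thus False
        proof
          assume "x < y"
          hence "x \<le> prv (Zs y) y" using zxy by (intro prv_ge) auto
          thus False using e zx by simp
        next
          assume "y < x"
          hence "y \<le> prv (Zs x) x" using zxy by (intro prv_ge) auto
          thus False using e zy by simp
        qed
      qed
    qed
    moreover have "(\<lambda>t. prv (Zs t) t) ` P i \<subseteq> Wr i"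
    proof
      fix p assume "p \<in> (\<lambda>t. prv (Zs t) t) ` P i"
      then obtain t where t: "t \<in> P i" "p = prv (Zs t) t" by auto
      have ex: "\<exists>s<t. Zs s = Zs t" using t unfolding P_def by auto
      show "p \<in> Wr i" using prv_props[OF ex] t unfolding P_def Wr_def by auto
    qed
    moreover have "finite (Wr i)" unfolding Wr_def by simp
    ultimately show ?thesis by (metis card_image card_mono)
  qed
  have "card {t. t < T \<and> \<not> good j t} \<le> card (Fs \<union> (\<Union>i<J. Wr i) \<union> (\<Union>i<J. P i))"
    using sub by (intro card_mono) (auto simp: Fs_def Wr_def P_def)
  also have "\<dots> \<le> card Fs + card (\<Union>i<J. Wr i) + card (\<Union>i<J. P i)"
    by (meson add_le_mono1 card_Un_le le_trans)
  also have "\<dots> \<le> card (Zs ` {..<T}) + (\<Sum>i<J. card (Wr i)) + (\<Sum>i<J. card (P i))"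
    using cF card_UN_le[of "{..<J}" Wr] card_UN_le[of "{..<J}" P] by auto
  also have "(\<Sum>i<J. card (P i)) \<le> (\<Sum>i<J. card (Wr i))" using cP by (intro sum_mono) auto
  also have "(\<Sum>i<J. card (Wr i)) = (\<Sum>i<J. Lc i)" unfolding Wr_def Lc_def ..
  finally show ?thesis by simp
qed

lemma regret_full:
  assumes eta: "eta > 0" and small: "576 * eta^2 * real J \<le> 1" and j: "j < J"
    and u: "\<forall>t<T. insimp K (u (Zs t))"
  shows "(\<Sum>t<T. (\<Sum>l<K. W t j l * loss t j l) - (\<Sum>l<K. u (Zs t) l * loss t j l))
     \<le> 2 * real (Lc j) + real (card (Zs ` {..<T})) * ln (real K) / eta
       + eta * (real T * (24 * eta * real J)^2 + 4 * (real (card (Zs ` {..<T})) + 2 * real (\<Sum>i<J. Lc i)))"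
proof -
  define Dt where "Dt t = (if good j t then 24 * eta * real J else 2)" for t
  have J1: "real J \<ge> 1" using j by simp
  have e24: "24 * eta \<le> 1"
  proof -
    have "576 * eta^2 * 1 \<le> 576 * eta^2 * real J" using J1 by (intro mult_left_mono) auto
    moreover have "(24 * eta)^2 = 576 * eta^2 * 1" by (simp add: power2_eq_square)
    ultimately have "(24 * eta)^2 \<le> 1^2" using small by simp
    thus "24 * eta \<le> 1" by (rule power2_le_imp_le) simp
  qed
  have D: "\<forall>t<T. \<forall>l<K. \<bar>loss t j l - hint j (Zs t) t l\<bar> \<le> Dt t"
  proof (intro allI impI)
    fix t l assume t: "t < T" and l: "l < K"
    show "\<bar>loss t j l - hint j (Zs t) t l\<bar> \<le> Dt t"
    proof (cases "good j t")
      case True thus ?thesis unfolding Dt_def using good_bound[OF eta small j t True l] by simp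
    next
      case False
      have "\<bar>loss t j l\<bar> \<le> 1" using loss_bnd t j l by auto
      moreover have "\<bar>hint j (Zs t) t l\<bar> \<le> 1" using hint_bnd t j l by auto
      ultimately show ?thesis unfolding Dt_def using False by simp
    qed
  qed
  have eD: "\<forall>t<T. eta * Dt t \<le> 1"
  proof (intro allI impI)
    fix t
    define x where "x = eta^2 * real J"
    have sx: "576 * x \<le> 1" using small unfolding x_def by (simp add: mult.assoc)
    have "eta * (24 * eta * real J) = 24 * x" unfolding x_def by (simp add: power2_eq_square mult_ac)
    hence a: "eta * (24 * eta * real J) \<le> 1" using sx by linarith
    have b: "eta * 2 \<le> 1" using e24 by simp
    show "eta * Dt t \<le> 1" unfolding Dt_def using a b by simp
  qed
  have vr: "(\<Sum>t<T. (\<Sum>l<K. X t j l * loss t j l)) \<le>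
         (\<Sum>t<T. (\<Sum>l<K. u (Zs t) l * loss t j l)) + real (card (Zs ` {..<T})) * ln (real K) / eta
         + eta * (\<Sum>t<T. (Dt t)^2)"
    by (rule virtual_regret[OF eta j u D eD])
  have "(\<Sum>t<T. (Dt t)^2) \<le> (\<Sum>t<T. (24 * eta * real J)^2 + (if \<not> good j t then 4 else 0))"
    unfolding Dt_def by (intro sum_mono) auto
  also have "\<dots> = real T * (24 * eta * real J)^2 + 4 * real (card {t. t < T \<and> \<not> good j t})"
    by (simp add: sum.distrib sum_if_const)
  also have "\<dots> \<le> real T * (24 * eta * real J)^2 + 4 * (real (card (Zs ` {..<T})) + 2 * real (\<Sum>i<J. Lc i))"
  proof -
    define S where "S = (\<Sum>i<J. Lc i)"
    have "card {t. t < T \<and> \<not> good j t} \<le> card (Zs ` {..<T}) + 2 * S" using bad_count[OF j] S_def by simp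
    hence "real (card {t. t < T \<and> \<not> good j t}) \<le> real (card (Zs ` {..<T}) + 2 * S)"
      by (simp only: of_nat_le_iff)
    hence "real (card {t. t < T \<and> \<not> good j t}) \<le> real (card (Zs ` {..<T})) + 2 * real S"
      by simp
    hence "4 * real (card {t. t < T \<and> \<not> good j t}) \<le> 4 * (real (card (Zs ` {..<T})) + 2 * real S)"
      by simp
    thus ?thesis unfolding S_def[symmetric] by (rule add_left_mono)
  qed
  finally have sD: "(\<Sum>t<T. (Dt t)^2) \<le> real T * (24 * eta * real J)^2 + 4 * (real (card (Zs ` {..<T})) + 2 * real (\<Sum>i<J. Lc i))" .
  have wx: "(\<Sum>t<T. (\<Sum>l<K. W t j l * loss t j l) - (\<Sum>l<K. X t j l * loss t j l)) \<le> 2 * real (Lc j)"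
    by (rule W_minus_X[OF j])
  have "(\<Sum>t<T. (\<Sum>l<K. W t j l * loss t j l) - (\<Sum>l<K. u (Zs t) l * loss t j l))
     = (\<Sum>t<T. (\<Sum>l<K. W t j l * loss t j l) - (\<Sum>l<K. X t j l * loss t j l))
       + ((\<Sum>t<T. (\<Sum>l<K. X t j l * loss t j l)) - (\<Sum>t<T. (\<Sum>l<K. u (Zs t) l * loss t j l)))"
    by (simp add: sum_subtractf)
  moreover have "eta * (\<Sum>t<T. (Dt t)^2) \<le> eta * (real T * (24 * eta * real J)^2 + 4 * (real (card (Zs ` {..<T})) + 2 * real (\<Sum>i<J. Lc i)))"
    using sD eta by (intro mult_left_mono) auto
  ultimately show ?thesis using vr wx by linarith
qed

end


lemma insimp_simplex: "insimp K w \<longleftrightarrow> w \<in> simplex K"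
  unfolding insimp_def simplex_def by auto

lemma avg_swap:
  fixes Zs :: "nat \<Rightarrow> 'z" and f :: "nat \<Rightarrow> real"
  shows "(\<Sum>t<T. (\<Sum>s\<in>{s. s < T \<and> Zs s = Zs t}. f s) / real (card {s. s < T \<and> Zs s = Zs t}))
       = (\<Sum>s<T. f s)"
proof -
  define c where "c t = real (card {s. s < T \<and> Zs s = Zs t})" for t
  have cpos: "c t > 0" if "t < T" for t
  proof -
    have "t \<in> {s. s < T \<and> Zs s = Zs t}" using that by simp
    hence "{s. s < T \<and> Zs s = Zs t} \<noteq> {}" by blast
    thus ?thesis unfolding c_def by (simp add: card_gt_0_iff)
  qed
  have "(\<Sum>t<T. (\<Sum>s\<in>{s. s < T \<and> Zs s = Zs t}. f s) / c t)
      = (\<Sum>t<T. \<Sum>s<T. if Zs s = Zs t then f s / c s else 0)"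
  proof (intro sum.cong refl)
    fix t assume "t \<in> {..<T}"
    have e: "{s. s < T \<and> Zs s = Zs t} = {s \<in> {..<T}. Zs s = Zs t}" by auto
    have "(\<Sum>s\<in>{s. s < T \<and> Zs s = Zs t}. f s) = (\<Sum>s<T. if Zs s = Zs t then f s else 0)"
      unfolding e by (subst sum.inter_filter) auto
    hence "(\<Sum>s\<in>{s. s < T \<and> Zs s = Zs t}. f s) / c t = (\<Sum>s<T. (if Zs s = Zs t then f s else 0) / c t)"
      by (simp add: sum_divide_distrib)
    also have "\<dots> = (\<Sum>s<T. if Zs s = Zs t then f s / c t else 0)"
      by (intro sum.cong refl) auto
    finally have "(\<Sum>s\<in>{s. s < T \<and> Zs s = Zs t}. f s) / c t = (\<Sum>s<T. if Zs s = Zs t then f s / c t else 0)" .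
    also have "\<dots> = (\<Sum>s<T. if Zs s = Zs t then f s / c s else 0)"
      by (intro sum.cong refl) (auto simp: c_def)
    finally show "(\<Sum>s\<in>{s. s < T \<and> Zs s = Zs t}. f s) / c t = (\<Sum>s<T. if Zs s = Zs t then f s / c s else 0)" .
  qed
  also have "\<dots> = (\<Sum>s<T. \<Sum>t<T. if Zs t = Zs s then f s / c s else 0)"
    by (subst sum.swap) (intro sum.cong refl, auto)
  also have "\<dots> = (\<Sum>s<T. f s)"
  proof (intro sum.cong refl)
    fix s assume s: "s \<in> {..<T}"
    have "(\<Sum>t<T. if Zs t = Zs s then f s / c s else 0) = f s / c s * c s"
      unfolding c_def by (simp add: sum_if_const eq_commute[of "Zs s"])
    also have "\<dots> = f s" using cpos[of s] s by simp
    finally show "(\<Sum>t<T. if Zs t = Zs s then f s / c s else 0) = f s" .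
  qed
  finally show ?thesis unfolding c_def .
qed

context game begin

lemma W_fun: "(\<lambda>t j. pomwu_play J K d phi Zs preds eta t j) = W"
  by (intro ext) (simp add: W_def)

abbreviation "Sz z \<equiv> {s. s < T \<and> Zs s = z}"
abbreviation "nu \<equiv> nu_hat J K Zs T W"

lemma Sz_pos: "t < T \<Longrightarrow> card (Sz (Zs t)) > 0"
  by (subst card_gt_0_iff) auto

lemma nu_prof: "t < T \<Longrightarrow> a \<in> profiles J K \<Longrightarrow>
   nu (Zs t) a = (\<Sum>s\<in>Sz (Zs t). \<Prod>i<J. W s i (a i)) / real (card (Sz (Zs t)))"
  using Sz_pos[of t] unfolding nu_hat_def by simp

lemma cost_eq:
  assumes t: "t < T" and j: "j < J"
  shows "cost J K d phi (nu (Zs t)) j (Zs t)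
       = (\<Sum>s\<in>Sz (Zs t). \<Sum>l<K. W s j l * loss s j l) / real (card (Sz (Zs t)))"
proof -
  define n where "n = real (card (Sz (Zs t)))"
  have "cost J K d phi (nu (Zs t)) j (Zs t)
      = (\<Sum>a\<in>profiles J K. (\<Sum>s\<in>Sz (Zs t). \<Prod>i<J. W s i (a i)) / n * ip d (phi j a) (Zs t))"
    unfolding cost_def n_def using nu_prof[OF t] by (intro sum.cong refl) auto
  also have "\<dots> = (\<Sum>a\<in>profiles J K. \<Sum>s\<in>Sz (Zs t). (\<Prod>i<J. W s i (a i)) * ip d (phi j a) (Zs t) / n)"
    by (intro sum.cong refl) (simp add: sum_divide_distrib sum_distrib_right)
  also have "\<dots> = (\<Sum>s\<in>Sz (Zs t). \<Sum>a\<in>profiles J K. (\<Prod>i<J. W s i (a i)) * ip d (phi j a) (Zs t) / n)"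
    by (rule sum.swap)
  also have "\<dots> = (\<Sum>s\<in>Sz (Zs t). \<Sum>a\<in>profiles J K. (\<Prod>i<J. W s i (a i)) * ip d (phi j a) (Zs t)) / n"
    by (simp add: sum_divide_distrib)
  also have "\<dots> = (\<Sum>s\<in>Sz (Zs t). \<Sum>l<K. W s j l * loss s j l) / n"
  proof -
    have "(\<Sum>a\<in>profiles J K. (\<Prod>i<J. W s i (a i)) * ip d (phi j a) (Zs t)) = (\<Sum>l<K. W s j l * loss s j l)"
      if s: "s \<in> Sz (Zs t)" for s
      using G2[OF j, of "W s" "\<lambda>a. ip d (phi j a) (Zs t)"] s unfolding loss_eq by simp
    thus ?thesis by (intro arg_cong[where f="\<lambda>x. x / n"] sum.cong refl) auto
  qed
  finally show ?thesis unfolding n_def .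
qed

lemma dev_eq:
  assumes t: "t < T" and j: "j < J" and p: "insimp K p"
  shows "dev_cost J K d phi p (nu (Zs t)) j (Zs t)
       = (\<Sum>s\<in>Sz (Zs t). \<Sum>k<K. p k * loss s j k) / real (card (Sz (Zs t)))"
proof -
  define n where "n = real (card (Sz (Zs t)))"
  define I where "I = {..<J} - {j}"
  have fin: "finite I" and nj: "j \<notin> I" and ins: "insert j I = {..<J}" unfolding I_def using j by auto
  have marg: "marg_minus K (nu (Zs t)) j b = (\<Sum>s\<in>Sz (Zs t). \<Prod>i\<in>I. W s i (b i)) / n"
    if b: "b \<in> others J K j" for b
  proof -
    have "marg_minus K (nu (Zs t)) j b = (\<Sum>k<K. (\<Sum>s\<in>Sz (Zs t). \<Prod>i<J. W s i ((b(j := k)) i)) / n)"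
      unfolding marg_minus_def n_def using nu_prof[OF t] upd_others[OF b j] by (intro sum.cong refl) auto
    also have "\<dots> = (\<Sum>s\<in>Sz (Zs t). \<Sum>k<K. \<Prod>i<J. W s i ((b(j := k)) i)) / n"
      by (simp add: sum_divide_distrib sum.swap[of _ "{..<K}"])
    also have "\<dots> = (\<Sum>s\<in>Sz (Zs t). \<Prod>i\<in>I. W s i (b i)) / n"
    proof -
      have "(\<Sum>k<K. \<Prod>i<J. W s i ((b(j := k)) i)) = (\<Prod>i\<in>I. W s i (b i))" for s
      proof -
        have "(\<Sum>k<K. \<Prod>i<J. W s i ((b(j := k)) i)) = (\<Sum>k<K. W s j k * (\<Prod>i\<in>I. W s i (b i)))"
          unfolding ins[symmetric] prod_upd_insert[OF fin nj] ..
        also have "\<dots> = (\<Sum>k<K. W s j k) * (\<Prod>i\<in>I. W s i (b i))" by (simp add: sum_distrib_right)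
        also have "(\<Sum>k<K. W s j k) = 1" using W_simp[of s j] by (simp add: insimp_def)
        finally show ?thesis by simp
      qed
      thus ?thesis by simp
    qed
    finally show ?thesis .
  qed
  have "dev_cost J K d phi p (nu (Zs t)) j (Zs t)
      = (\<Sum>b\<in>others J K j. \<Sum>k<K. p k * ((\<Sum>s\<in>Sz (Zs t). \<Prod>i\<in>I. W s i (b i)) / n) * ip d (phi j (b(j := k))) (Zs t))"
    unfolding dev_cost_def using marg by (intro sum.cong refl) auto
  also have "\<dots> = (\<Sum>b\<in>others J K j. \<Sum>k<K. \<Sum>s\<in>Sz (Zs t). p k * (\<Prod>i\<in>I. W s i (b i)) * ip d (phi j (b(j := k))) (Zs t) / n)"
    by (intro sum.cong refl) (simp add: sum_divide_distrib sum_distrib_left sum_distrib_right mult_ac)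
  also have "\<dots> = (\<Sum>k<K. \<Sum>b\<in>others J K j. \<Sum>s\<in>Sz (Zs t). p k * (\<Prod>i\<in>I. W s i (b i)) * ip d (phi j (b(j := k))) (Zs t) / n)"
    by (rule sum.swap)
  also have "\<dots> = (\<Sum>k<K. \<Sum>s\<in>Sz (Zs t). \<Sum>b\<in>others J K j. p k * (\<Prod>i\<in>I. W s i (b i)) * ip d (phi j (b(j := k))) (Zs t) / n)"
    by (intro sum.cong refl) (rule sum.swap)
  also have "\<dots> = (\<Sum>s\<in>Sz (Zs t). \<Sum>k<K. \<Sum>b\<in>others J K j. p k * (\<Prod>i\<in>I. W s i (b i)) * ip d (phi j (b(j := k))) (Zs t) / n)"
    by (rule sum.swap)
  also have "\<dots> = (\<Sum>s\<in>Sz (Zs t). \<Sum>k<K. p k * (\<Sum>b\<in>others J K j. (\<Prod>i\<in>I. W s i (b i)) * ip d (phi j (b(j := k))) (Zs t)) / n)"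
    by (intro sum.cong refl) (simp add: sum_divide_distrib sum_distrib_left mult_ac)
  also have "\<dots> = (\<Sum>s\<in>Sz (Zs t). \<Sum>k<K. p k * (\<Sum>b\<in>others J K j. (\<Prod>i\<in>I. W s i (b i)) * ip d (phi j (b(j := k))) (Zs t))) / n"
    by (simp add: sum_divide_distrib)
  also have "\<dots> = (\<Sum>s\<in>Sz (Zs t). \<Sum>k<K. p k * loss s j k) / n"
  proof -
    have "(\<Sum>k<K. p k * (\<Sum>b\<in>others J K j. (\<Prod>i\<in>I. W s i (b i)) * ip d (phi j (b(j := k))) (Zs t)))
        = (\<Sum>k<K. p k * loss s j k)" if s: "s \<in> Sz (Zs t)" for s
      unfolding loss_eq I_def using s by simp
    hence "(\<Sum>s\<in>Sz (Zs t). \<Sum>k<K. p k * (\<Sum>b\<in>others J K j. (\<Prod>i\<in>I. W s i (b i)) * ip d (phi j (b(j := k))) (Zs t)))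
        = (\<Sum>s\<in>Sz (Zs t). \<Sum>k<K. p k * loss s j k)"
      by (rule sum.cong[OF refl])
    thus ?thesis by simp
  qed
  finally show ?thesis unfolding n_def .
qed

lemma sum_cost: "j < J \<Longrightarrow> (\<Sum>t<T. cost J K d phi (nu (Zs t)) j (Zs t)) = (\<Sum>s<T. \<Sum>l<K. W s j l * loss s j l)"
  using avg_swap[where Zs=Zs and f="\<lambda>s. \<Sum>l<K. W s j l * loss s j l" and T=T] by (simp add: cost_eq)

lemma sum_dev: "j < J \<Longrightarrow> \<forall>t<T. insimp K (pp (Zs t)) \<Longrightarrow>
   (\<Sum>t<T. dev_cost J K d phi (pp (Zs t)) (nu (Zs t)) j (Zs t)) = (\<Sum>s<T. \<Sum>k<K. pp (Zs s) k * loss s j k)"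
proof -
  assume j: "j < J" and p: "\<forall>t<T. insimp K (pp (Zs t))"
  have "(\<Sum>t<T. dev_cost J K d phi (pp (Zs t)) (nu (Zs t)) j (Zs t))
      = (\<Sum>t<T. (\<Sum>s\<in>Sz (Zs t). \<Sum>k<K. pp (Zs s) k * loss s j k) / real (card (Sz (Zs t))))"
  proof (intro sum.cong refl)
    fix t assume "t \<in> {..<T}"
    hence t: "t < T" by simp
    have "(\<Sum>s\<in>Sz (Zs t). \<Sum>k<K. pp (Zs t) k * loss s j k) = (\<Sum>s\<in>Sz (Zs t). \<Sum>k<K. pp (Zs s) k * loss s j k)"
      by (intro sum.cong refl) auto
    thus "dev_cost J K d phi (pp (Zs t)) (nu (Zs t)) j (Zs t) = (\<Sum>s\<in>Sz (Zs t). \<Sum>k<K. pp (Zs s) k * loss s j k) / real (card (Sz (Zs t)))"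
      using dev_eq[OF t j] p t by simp
  qed
  also have "\<dots> = (\<Sum>s<T. \<Sum>k<K. pp (Zs s) k * loss s j k)" by (rule avg_swap)
  finally show ?thesis .
qed

end


lemma pw4:
  fixes x :: real assumes "x > 0"
  shows "(x powr (1/4))^4 = x" "x powr (1/2) = (x powr (1/4))^2" "x powr (3/4) = (x powr (1/4))^3"
    "x powr (-1/2) = 1 / (x powr (1/4))^2" "x powr (-1/4) = 1 / (x powr (1/4))"
    "x powr (-3/4) = 1 / (x powr (1/4))^3" "x powr (1/4) > 0"
proof -
  have g: "(x powr (1/4))^n = x powr (real n / 4)" for n :: nat
    using assms by (simp add: powr_realpow[symmetric] powr_powr)
  show "(x powr (1/4))^4 = x" using g[of 4] assms by simp
  show "x powr (1/2) = (x powr (1/4))^2" using g[of 2] by simp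
  show "x powr (3/4) = (x powr (1/4))^3" using g[of 3] by simp
  show "x powr (-1/2) = 1 / (x powr (1/4))^2" using g[of 2] assms by (simp add: powr_minus_divide)
  show "x powr (-1/4) = 1 / (x powr (1/4))" using assms by (simp add: powr_minus_divide)
  show "x powr (-3/4) = 1 / (x powr (1/4))^3" using g[of 3] assms by (simp add: powr_minus_divide)
  show "x powr (1/4) > 0" using assms by simp
qed

lemma ln2_half: "ln (2::real) \<ge> 1/2"
proof -
  have "exp (1/2::real) \<le> 1 + 1/2 + (1/2)^2" by (rule exp_bound) auto
  also have "\<dots> \<le> 2" by (simp add: power2_eq_square)
  finally have "exp (1/2::real) \<le> 2" .
  hence "ln (exp (1/2::real)) \<le> ln 2" by (subst ln_le_cancel_iff) auto
  thus ?thesis by simp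
qed

lemma fourth_root_le:
  fixes E L :: real assumes "E \<ge> 0" "L \<ge> 0" "L^4 \<le> E^4" shows "L \<le> E"
proof -
  have "L ^ Suc 3 \<le> E ^ Suc 3" using assms(3) by (simp add: eval_nat_numeral)
  thus ?thesis using power_le_imp_le_base[of L 3 E] assms by simp
qed

context game begin

lemma trivial_bound:
  assumes j: "j < J" and u: "\<forall>t<T. insimp K (u (Zs t))"
  shows "(\<Sum>t<T. (\<Sum>l<K. W t j l * loss t j l) - (\<Sum>l<K. u (Zs t) l * loss t j l)) \<le> 2 * real T"
proof -
  have "(\<Sum>t<T. (\<Sum>l<K. W t j l * loss t j l) - (\<Sum>l<K. u (Zs t) l * loss t j l)) \<le> (\<Sum>t<T. 2)"
  proof (intro sum_mono)
    fix t assume "t \<in> {..<T}"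
    hence t: "t < T" by simp
    have lb: "\<forall>l<K. \<bar>loss t j l\<bar> \<le> 1" using loss_bnd t j by auto
    have "\<bar>\<Sum>l<K. W t j l * loss t j l\<bar> \<le> 1" using simp_abs[OF W_simp lb] .
    moreover have "\<bar>\<Sum>l<K. u (Zs t) l * loss t j l\<bar> \<le> 1" using simp_abs[OF _ lb] u t by auto
    ultimately show "(\<Sum>l<K. W t j l * loss t j l) - (\<Sum>l<K. u (Zs t) l * loss t j l) \<le> 2" by linarith
  qed
  thus ?thesis by simp
qed

lemma main_bound:
  fixes L m :: real
  assumes j: "j < J" and u: "\<forall>t<T. insimp K (u (Zs t))"
    and K2: "K \<ge> 2" and T0: "T > 0"
    and Lc: "\<forall>i<J. real (Lc i) \<le> L" and L0: "L \<ge> 0"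
    and mm: "real (card (Zs ` {..<T})) \<le> m"
    and TL: "real T \<ge> real J ^ 2 * L"
    and etadef: "eta = real J powr (-1/2) * real T powr (-1/4) * (ln (real K) * (L + m)) powr (1/4)"
  shows "(\<Sum>t<T. (\<Sum>l<K. W t j l * loss t j l) - (\<Sum>l<K. u (Zs t) l * loss t j l))
     \<le> real T * (30000 * (ln (real K) * (L + m)) powr (3/4) * real T powr (-3/4) * real J powr (1/2))"
proof -
  define X where "X = ln (real K) * (L + m)"
  have lnK: "ln (real K) \<ge> 1/2"
  proof -
    have "ln (2::real) \<le> ln (real K)" using K2 by (subst ln_le_cancel_iff) auto
    thus ?thesis using ln2_half by linarith
  qed
  have m1: "m \<ge> 1"
  proof -
    have "Zs 0 \<in> Zs ` {..<T}" using T0 by auto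
    hence "card (Zs ` {..<T}) \<ge> 1" by (metis One_nat_def Suc_leI card_gt_0_iff empty_iff finite_imageI finite_lessThan)
    thus ?thesis using mm by linarith
  qed
  have X2: "L + m \<le> 2 * X"
  proof -
    have "(1/2) * (L + m) \<le> ln (real K) * (L + m)" using lnK L0 m1 by (intro mult_right_mono) auto
    thus ?thesis unfolding X_def by simp
  qed
  have Xp: "X > 0" using X2 L0 m1 by linarith
  have J1: "real J \<ge> 1" using j by simp
  have Jp: "real J > 0" and Tp: "real T > 0" using J1 T0 by auto
  define a where "a = real J powr (1/4)"
  define b where "b = real T powr (1/4)"
  define c where "c = X powr (1/4)"
  have ap: "a > 0" and bp: "b > 0" and cp: "c > 0" unfolding a_def b_def c_def using Jp Tp Xp by auto
  have a4: "real J = a^4" unfolding a_def using pw4(1)[OF Jp] by simp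
  have b4: "real T = b^4" unfolding b_def using pw4(1)[OF Tp] by simp
  have c4: "X = c^4" unfolding c_def using pw4(1)[OF Xp] by simp
  have eta_eq: "eta = c / (a^2 * b)"
    unfolding etadef X_def[symmetric] pw4(4)[OF Jp] pw4(5)[OF Tp] a_def[symmetric] b_def[symmetric] c_def[symmetric]
    by simp
  have etap: "eta > 0" unfolding eta_eq using ap bp cp by simp
  define E where "E = c^3 * a^2 * b"
  have Ep: "E > 0" unfolding E_def using ap bp cp by simp
  have RHS: "real T * (30000 * (ln (real K) * (L + m)) powr (3/4) * real T powr (-3/4) * real J powr (1/2)) = 30000 * E"
    unfolding X_def[symmetric] pw4(3)[OF Xp] pw4(6)[OF Tp] pw4(2)[OF Jp] a_def[symmetric] b_def[symmetric] c_def[symmetric] E_def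
    using bp by (simp add: b4 field_simps power_def eval_nat_numeral)
  have XE: "X / eta = E" unfolding eta_eq c4 E_def using ap bp cp by (simp add: field_simps eval_nat_numeral)
  have eE: "eta^3 * real J^2 * real T = E" unfolding eta_eq a4 b4 E_def using ap bp cp
    by (simp add: field_simps eval_nat_numeral)
  show ?thesis
  proof (cases "576 * eta^2 * real J \<le> 1")
    case small: True
    define m' where "m' = real (card (Zs ` {..<T}))"
    define S where "S = real (\<Sum>i<J. Lc i)"
    have R: "(\<Sum>t<T. (\<Sum>l<K. W t j l * loss t j l) - (\<Sum>l<K. u (Zs t) l * loss t j l))
     \<le> 2 * real (Lc j) + m' * ln (real K) / eta
       + eta * (real T * (24 * eta * real J)^2 + 4 * (m' + 2 * S))"
      unfolding m'_def S_def by (rule regret_full[OF etap small j u])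
    have e2: "eta^2 \<le> 1/576"
    proof -
      have "576 * eta^2 * 1 \<le> 576 * eta^2 * real J" using J1 by (intro mult_left_mono) auto
      thus ?thesis using small by simp
    qed
    have t1: "m' * ln (real K) / eta \<le> E"
    proof -
      have "m' \<le> L + m" using mm L0 unfolding m'_def by linarith
      hence "ln (real K) * m' \<le> ln (real K) * (L + m)" using lnK by (intro mult_left_mono) auto
      hence "m' * ln (real K) \<le> X" unfolding X_def by (simp add: mult.commute)
      hence "m' * ln (real K) / eta \<le> X / eta" using etap by (intro divide_right_mono) auto
      thus ?thesis using XE by simp
    qed
    have t2: "eta * (real T * (24 * eta * real J)^2) = 576 * E"
      unfolding eE[symmetric] by (simp add: power2_eq_square power3_eq_cube)
    have ex: "eta * X = eta^2 * E" using XE etap by (simp add: field_simps power2_eq_square)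
    have t3: "eta * (4 * m') \<le> E"
    proof -
      have "m' \<le> 2 * X" using mm X2 L0 unfolding m'_def by linarith
      hence "eta * (4 * m') \<le> eta * (8 * X)" using etap by (intro mult_left_mono) auto
      also have "\<dots> = 8 * (eta^2 * E)" using ex by simp
      also have "\<dots> \<le> 8 * ((1/576) * E)" using e2 Ep by (intro mult_left_mono mult_right_mono) auto
      also have "\<dots> \<le> E" using Ep by simp
      finally show ?thesis .
    qed
    have t4: "eta * (8 * S) \<le> E"
    proof -
      have "S \<le> (\<Sum>i<J. L)" unfolding S_def of_nat_sum using Lc by (intro sum_mono) auto
      also have "\<dots> = real J * L" by simp
      also have "\<dots> \<le> real J * (2 * X)" using X2 m1 Jp by (intro mult_left_mono) auto
      finally have sS: "S \<le> real J * (2 * X)" .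
      have "eta * (8 * S) \<le> eta * (8 * (real J * (2 * X)))" using sS etap by (intro mult_left_mono) auto
      also have "\<dots> = 16 * (eta^2 * real J) * E" using ex by (simp add: algebra_simps)
      also have "\<dots> \<le> 16 * (1/576) * E" using small Ep by (intro mult_right_mono mult_left_mono) auto
      also have "\<dots> \<le> E" using Ep by simp
      finally show ?thesis .
    qed
    have t5: "2 * real (Lc j) \<le> 4 * E"
    proof -
      have "E^4 = X^3 * real J^2 * real T" unfolding E_def c4 a4 b4 by (simp add: power_mult_distrib power_mult[symmetric] eval_nat_numeral mult_ac)
      also have "\<dots> \<ge> X^3 * real J^2 * (real J^2 * L)" using TL Xp by (intro mult_left_mono) auto
      finally have "X^3 * (real J^2 * real J^2) * L \<le> E^4" by (simp add: mult_ac)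
      moreover have "X^3 * 1 * L \<le> X^3 * (real J^2 * real J^2) * L"
      proof -
        have j2: "1 \<le> real J^2" using J1 by (simp add: one_le_power)
        have "1 * 1 \<le> real J^2 * real J^2" using j2 by (intro mult_mono) auto
        hence "1 \<le> real J^2 * real J^2" by simp
        thus ?thesis using Xp L0 by (intro mult_right_mono mult_left_mono) auto
      qed
      moreover have "(L/2)^3 * L \<le> X^3 * L" using X2 m1 L0 by (intro mult_right_mono power_mono) auto
      moreover have "(L/2)^4 \<le> (L/2)^3 * L" using L0 by (simp add: eval_nat_numeral field_simps)
      ultimately have "(L/2)^4 \<le> E^4" by linarith
      hence "L/2 \<le> E" using fourth_root_le[of E "L/2"] Ep L0 by simp
      thus ?thesis using Lc j by fastforce
    qed
    have "eta * (real T * (24 * eta * real J)^2 + 4 * (m' + 2 * S))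
        = eta * (real T * (24 * eta * real J)^2) + eta * (4 * m') + eta * (8 * S)" by (simp add: algebra_simps)
    hence "(\<Sum>t<T. (\<Sum>l<K. W t j l * loss t j l) - (\<Sum>l<K. u (Zs t) l * loss t j l)) \<le> 583 * E"
      using R t1 t2 t3 t4 t5 by linarith
    thus ?thesis unfolding RHS using Ep by linarith
  next
    case False
    have big: "eta^3 * real J^2 \<ge> 1 / 13824"
    proof (rule ccontr)
      assume "\<not> ?thesis"
      hence lt: "eta^3 * real J^2 < 1 / 13824" by simp
      have nn: "0 \<le> eta^3 * real J^2" using etap by simp
      have "(eta^3 * real J^2)^2 < (1/13824)^2" using lt nn by (intro power_strict_mono) auto
      moreover have "(eta^3 * real J^2)^2 \<ge> (eta^2 * real J)^3"
      proof -
        have "(eta^3 * real J^2)^2 = (eta^2 * real J)^3 * real J" by (simp add: power_mult_distrib power_mult[symmetric] eval_nat_numeral mult_ac)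
        moreover have "(eta^2 * real J)^3 * 1 \<le> (eta^2 * real J)^3 * real J"
          using J1 etap by (intro mult_left_mono) auto
        ultimately show ?thesis by simp
      qed
      moreover have "(eta^2 * real J)^3 > (1/576)^3"
        using False by (intro power_strict_mono) auto
      moreover have "(1/13824::real)^2 = (1/576)^3" by (simp add: power2_eq_square power3_eq_cube)
      ultimately show False by linarith
    qed
    have "2 * real T \<le> 30000 * (eta^3 * real J^2) * real T"
    proof -
      have "2 \<le> 30000 * (eta^3 * real J^2)" using big by simp
      thus ?thesis using Tp by (intro mult_right_mono) auto
    qed
    hence "2 * real T \<le> 30000 * E" using eE by (simp add: mult_ac)
    thus ?thesis unfolding RHS using trivial_bound[OF j u] by linarith
  qed
qed

end


lemma div_step:
  fixes A B eps :: real and T :: nat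
  assumes "T > 0" "A - B \<le> real T * eps"
  shows "A / real T \<le> B / real T + eps"
proof -
  have "(A - B) / real T \<le> eps" using assms by (simp add: divide_le_eq mult.commute)
  thus ?thesis by (simp add: diff_divide_distrib)
qed

lemma main_thm:
  fixes J K d :: nat and phi :: "nat \<Rightarrow> (nat \<Rightarrow> nat) \<Rightarrow> nat \<Rightarrow> real" and Zset :: "(nat \<Rightarrow> real) set"
    and Zs :: "nat \<Rightarrow> nat \<Rightarrow> real" and preds :: "nat \<Rightarrow> nat \<Rightarrow> nat \<Rightarrow> real" and T :: nat
  assumes h: "J \<ge> 2 \<and> K \<ge> 1 \<and> finite Zset \<and> Zset \<subseteq> vecs d
     \<and> (\<forall>t<T. Zs t \<in> Zset) \<and> (\<forall>j<J. \<forall>t<T. preds j t \<in> Zset)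
     \<and> (\<forall>j<J. \<forall>a\<in>profiles J K. \<forall>z\<in>Zset. \<bar>ip d (phi j a) z\<bar> \<le> 1)
     \<and> real T \<ge> 1 * real J ^ 2 * real (Lbar J T preds Zs)"
  shows "(let L = real (Lbar J T preds Zs); m = real (card Zset);
             eta = 1 * real J powr (-1/2) * real T powr (-1/4) * (ln (real K) * (L + m)) powr (1/4)
         in contextual_CCE J K d phi Zset Zs T
              (nu_hat J K Zs T (\<lambda>t j. pomwu_play J K d phi Zs preds eta t j))
              (30000 * (ln (real K) * (L + m)) powr (3/4) * real T powr (-3/4) * real J powr (1/2)))"
proof -
  define L where "L = real (Lbar J T preds Zs)"
  define m where "m = real (card Zset)"
  define eta where "eta = real J powr (-1/2) * real T powr (-1/4) * (ln (real K) * (L + m)) powr (1/4)"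
  define eps where "eps = 30000 * (ln (real K) * (L + m)) powr (3/4) * real T powr (-3/4) * real J powr (1/2)"
  have J2: "J \<ge> 2" and K1: "K \<ge> 1" and finZ: "finite Zset" and ZsZ: "\<forall>t<T. Zs t \<in> Zset"
    and bd: "\<forall>j<J. \<forall>a\<in>profiles J K. \<forall>z\<in>Zset. \<bar>ip d (phi j a) z\<bar> \<le> 1"
    and TL: "real T \<ge> real J ^ 2 * L" using h unfolding L_def by auto
  interpret g: game J K d phi Zs preds eta T
  proof
    show "K \<ge> 1" by (rule K1)
    show "\<forall>j<J. \<forall>a\<in>profiles J K. \<forall>t<T. \<bar>ip d (phi j a) (Zs t)\<bar> \<le> 1" using bd ZsZ by auto
  qed
  have eps0: "eps \<ge> 0" unfolding eps_def by simp
  have "contextual_CCE J K d phi Zset Zs T g.nu eps"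
    unfolding contextual_CCE_def
  proof (intro allI impI)
    fix j pp assume j: "j < J" and pp: "\<forall>z\<in>Zset. pp z \<in> simplex K"
    have u: "\<forall>t<T. insimp K (pp (Zs t))" using pp ZsZ by (auto simp: insimp_simplex)
    have key: "(\<Sum>s<T. \<Sum>l<K. g.W s j l * g.loss s j l) / real T
        \<le> (\<Sum>s<T. \<Sum>k<K. pp (Zs s) k * g.loss s j k) / real T + eps"
    proof (cases "T = 0")
      case True thus ?thesis using eps0 by simp
    next
      case False
      hence T0: "T > 0" by simp
      have R: "(\<Sum>s<T. \<Sum>l<K. g.W s j l * g.loss s j l) - (\<Sum>s<T. \<Sum>k<K. pp (Zs s) k * g.loss s j k) \<le> real T * eps"
      proof (cases "K = 1")
        case True
        have "(\<Sum>s<T. \<Sum>l<K. g.W s j l * g.loss s j l) = (\<Sum>s<T. \<Sum>k<K. pp (Zs s) k * g.loss s j k)"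
        proof (rule sum.cong[OF refl])
          fix s assume "s \<in> {..<T}"
          hence "insimp K (pp (Zs s))" using u by auto
          moreover have "insimp K (g.W s j)" by (rule g.W_simp)
          ultimately show "(\<Sum>l<K. g.W s j l * g.loss s j l) = (\<Sum>k<K. pp (Zs s) k * g.loss s j k)"
            using True by (simp add: insimp_def)
        qed
        thus ?thesis using eps0 T0 by simp
      next
        case False
        hence K2: "K \<ge> 2" using K1 by simp
        have Lc: "\<forall>i<J. real (g.Lc i) \<le> L"
        proof (intro allI impI)
          fix i assume i: "i < J"
          have "g.Lc i \<le> Lbar J T preds Zs" unfolding g.Lc_def Lbar_def
            using i by (intro Max_ge) auto
          thus "real (g.Lc i) \<le> L" unfolding L_def by simp
        qed
        have mm: "real (card (Zs ` {..<T})) \<le> m"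
          unfolding m_def using ZsZ finZ by (auto intro!: card_mono)
        have "(\<Sum>t<T. (\<Sum>l<K. g.W t j l * g.loss t j l) - (\<Sum>l<K. pp (Zs t) l * g.loss t j l)) \<le> real T * eps"
          unfolding eps_def
          by (rule g.main_bound[OF j u K2 T0 Lc _ mm TL eta_def]) (simp add: L_def)
        thus ?thesis by (simp add: sum_subtractf)
      qed
      show ?thesis by (rule div_step[OF T0 R])
    qed
    show "(\<Sum>t<T. cost J K d phi (g.nu (Zs t)) j (Zs t)) / real T
        \<le> (\<Sum>t<T. dev_cost J K d phi (pp (Zs t)) (g.nu (Zs t)) j (Zs t)) / real T + eps"
      unfolding g.sum_cost[OF j] g.sum_dev[OF j u] by (rule key)
  qed
  moreover have e: "1 * real J powr (-1/2) * real T powr (-1/4) * (ln (real K) * (L + m)) powr (1/4) = eta"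
    by (simp add: eta_def)
  ultimately show ?thesis unfolding Let_def L_def[symmetric] m_def[symmetric] e g.W_fun eps_def[symmetric] by blast
qed

theorem corollary1:
  "\<exists>c0>0. \<exists>ceta>0. \<exists>C>0. \<forall>(J::nat) (K::nat) (d::nat)
       (phi :: nat \<Rightarrow> (nat \<Rightarrow> nat) \<Rightarrow> nat \<Rightarrow> real) (Zset :: (nat \<Rightarrow> real) set)
       (Zs :: nat \<Rightarrow> nat \<Rightarrow> real) (preds :: nat \<Rightarrow> nat \<Rightarrow> nat \<Rightarrow> real) (T::nat).
     J \<ge> 2 \<and> K \<ge> 1 \<and> finite Zset \<and> Zset \<subseteq> vecs d
     \<and> (\<forall>t<T. Zs t \<in> Zset) \<and> (\<forall>j<J. \<forall>t<T. preds j t \<in> Zset)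
     \<and> (\<forall>j<J. \<forall>a\<in>profiles J K. \<forall>z\<in>Zset. \<bar>ip d (phi j a) z\<bar> \<le> 1)
     \<and> real T \<ge> c0 * real J ^ 2 * real (Lbar J T preds Zs)
     \<longrightarrow> (let L = real (Lbar J T preds Zs); m = real (card Zset);
             eta = ceta * real J powr (-1/2) * real T powr (-1/4) * (ln (real K) * (L + m)) powr (1/4)
         in contextual_CCE J K d phi Zset Zs T
              (nu_hat J K Zs T (\<lambda>t j. pomwu_play J K d phi Zs preds eta t j))
              (C * (ln (real K) * (L + m)) powr (3/4) * real T powr (-3/4) * real J powr (1/2)))"
proof -
  have A: "\<forall>(J::nat) (K::nat) (d::nat)
       (phi :: nat \<Rightarrow> (nat \<Rightarrow> nat) \<Rightarrow> nat \<Rightarrow> real) (Zset :: (nat \<Rightarrow> real) set)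
       (Zs :: nat \<Rightarrow> nat \<Rightarrow> real) (preds :: nat \<Rightarrow> nat \<Rightarrow> nat \<Rightarrow> real) (T::nat).
     J \<ge> 2 \<and> K \<ge> 1 \<and> finite Zset \<and> Zset \<subseteq> vecs d
     \<and> (\<forall>t<T. Zs t \<in> Zset) \<and> (\<forall>j<J. \<forall>t<T. preds j t \<in> Zset)
     \<and> (\<forall>j<J. \<forall>a\<in>profiles J K. \<forall>z\<in>Zset. \<bar>ip d (phi j a) z\<bar> \<le> 1)
     \<and> real T \<ge> 1 * real J ^ 2 * real (Lbar J T preds Zs)
     \<longrightarrow> (let L = real (Lbar J T preds Zs); m = real (card Zset);
             eta = 1 * real J powr (-1/2) * real T powr (-1/4) * (ln (real K) * (L + m)) powr (1/4)
         in contextual_CCE J K d phi Zset Zs T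
              (nu_hat J K Zs T (\<lambda>t j. pomwu_play J K d phi Zs preds eta t j))
              (30000 * (ln (real K) * (L + m)) powr (3/4) * real T powr (-3/4) * real J powr (1/2)))"
    using main_thm by blast
  show ?thesis
    apply (rule exI[where x=1])
    apply (rule conjI, simp)
    apply (rule exI[where x=1])
    apply (rule conjI, simp)
    apply (rule exI[where x=30000])
    apply (rule conjI, simp)
    by (rule A)
qed


end
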